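(* Let $M=\{u=F(z_1,z_2,\bar z_1,\bar z_2)\}\subset\mathbb{C}^3$ be a rigid real-analytic hypersurface with $F_{z_1\bar z_1}$ nowhere zero, $F_{z_1\bar z_1}F_{z_2\bar z_2}-F_{z_2\bar z_1}F_{z_1\bar z_2}\equiv0$, and $\overline{\mathcal{L}}_1(k)$ nowhere zero, with the notation below. Define $$I_0:=-\frac13\frac{\mathcal{K}(\overline{\mathcal{L}}_1(\overline{\mathcal{L}}_1(k)))}{\overline{\mathcal{L}}_1(k)^2}+\frac13\frac{\mathcal{K}(\overline{\mathcal{L}}_1(k))\,\overline{\mathcal{L}}_1(\overline{\mathcal{L}}_1(k))}{\overline{\mathcal{L}}_1(k)^3}+\frac23\frac{\mathcal{L}_1(\mathcal{L}_1(\bar k))}{\mathcal{L}_1(\bar k)}+\frac23\frac{\mathcal{L}_1(\overline{\mathcal{L}}_1(k))}{\overline{\mathcal{L}}_1(k)},$$ $$V_0:=-\frac13\frac{\overline{\mathcal{L}}_1(\overline{\mathcal{L}}_1(\overline{\mathcal{L}}_1(k)))}{\overline{\mathcal{L}}_1(k)}+\frac59\Big(\frac{\overline{\mathcal{L}}_1(\overline{\mathcal{L}}_1(k))}{\overline{\mathcal{L}}_1(k)}\Big)^2-\frac19\frac{\overline{\mathcal{L}}_1(\overline{\mathcal{L}}_1(k))\,\bar P}{\overline{\mathcal{L}}_1(k)}+\frac13\overline{\mathcal{L}}_1(\bar P)-\frac19\bar P\bar P,$$ $$B:=\frac13\Big(\frac{\overline{\mathcal{L}}_1(\overline{\mathcal{L}}_1(k))}{\overline{\mathcal{L}}_1(k)}-\bar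 P\Big),\qquad \mathcal{Q}_0:=\frac12\overline{\mathcal{L}}_1(I_0)+\frac12 B\,I_0+\bar B\,\bar I_0-\frac12\frac{\mathcal{K}(V_0)}{\overline{\mathcal{L}}_1(k)} .$$ Then $$\mathcal{Q}_0=B\,I_0+\bar B\,\bar I_0-B\bar B+\frac23\operatorname{Re}\Big\{\mathcal{L}_1\Big[\frac{\overline{\mathcal{L}}_1(\overline{\mathcal{L}}_1(k))}{\overline{\mathcal{L}}_1(k)}\Big]\Big\}+\frac13\operatorname{Re}\big(\overline{\mathcal{L}}_1(P)\big).$$
   Context: Coordinates on $\mathbb{C}^3$ are $(z_1,z_2,w)$, $w=u+iv$; $M$ is parametrized by $(z_1,z_2,\bar z_1,\bar z_2,v)$. The vector fields are $\mathcal{L}_1:=\partial_{z_1}-iF_{z_1}\partial_v$, $\mathcal{L}_2:=\partial_{z_2}-iF_{z_2}\partial_v$, and $\overline{\mathcal{L}}_1:=\partial_{\bar z_1}+iF_{\bar z_1}\partial_v$ (complex conjugate); on functions independent of $v$ (as all functions below are) they act as $\partial_{z_1},\partial_{z_2},\partial_{\bar z_1}$ respectively. The slant function is $k:=-F_{z_2\bar z_1}/F_{z_1\bar z_1}$, $\mathcal{K}:=k\,\mathcal{L}_1+\mathcal{L}_2$, and $P:=F_{z_1z_1\bar z_1}/F_{z_1\bar z_1}$. A bar over a function denotes complex conjugation (so $\bar k,\bar P,\bar I_0,\bar B$ are the conjugates of $k,P,I_0,B$). *)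

theory Defs
  imports "HOL-Analysis.Analysis"
begin

type_synonym pt = "complex \<times> complex"

definition real_analytic_on :: "pt set \<Rightarrow> (pt \<Rightarrow> real) \<Rightarrow> bool" where
  "real_analytic_on U F \<longleftrightarrow>
     (\<forall>p\<in>U. \<exists>r>0. \<exists>c :: nat \<times> nat \<times> nat \<times> nat \<Rightarrow> real.
        \<forall>q\<in>ball p r.
          ((\<lambda>(a,b,d,e). c (a,b,d,e)
              * (Re (fst q) - Re (fst p)) ^ a * (Im (fst q) - Im (fst p)) ^ b
              * (Re (snd q) - Re (snd p)) ^ d * (Im (snd q) - Im (snd p)) ^ e)
           has_sum F q) UNIV)"

definition pdir :: "pt \<Rightarrow> (pt \<Rightarrow> complex) \<Rightarrow> pt \<Rightarrow> complex" where
  "pdir v g p = vector_derivative (\<lambda>t::real. g (p + t *\<^sub>R v)) (at 0)"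

(* Wirtinger derivatives. On functions independent of v the vector fields
   L1, L2, conj L1 act exactly as d/dz1, d/dz2, d/d(bar z1). *)
definition Dz1 :: "(pt \<Rightarrow> complex) \<Rightarrow> pt \<Rightarrow> complex" where
  "Dz1 g p = (pdir (1,0) g p - \<i> * pdir (\<i>,0) g p) / 2"
definition Dzb1 :: "(pt \<Rightarrow> complex) \<Rightarrow> pt \<Rightarrow> complex" where
  "Dzb1 g p = (pdir (1,0) g p + \<i> * pdir (\<i>,0) g p) / 2"
definition Dz2 :: "(pt \<Rightarrow> complex) \<Rightarrow> pt \<Rightarrow> complex" where
  "Dz2 g p = (pdir (0,1) g p - \<i> * pdir (0,\<i>) g p) / 2"
definition Dzb2 :: "(pt \<Rightarrow> complex) \<Rightarrow> pt \<Rightarrow> complex" where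
  "Dzb2 g p = (pdir (0,1) g p + \<i> * pdir (0,\<i>) g p) / 2"

abbreviation (input) cF :: "(pt \<Rightarrow> real) \<Rightarrow> pt \<Rightarrow> complex" where
  "cF F \<equiv> (\<lambda>p. complex_of_real (F p))"

definition slant :: "(pt \<Rightarrow> real) \<Rightarrow> pt \<Rightarrow> complex" where
  "slant F p = - Dz2 (Dzb1 (cF F)) p / Dz1 (Dzb1 (cF F)) p"

definition Pfun :: "(pt \<Rightarrow> real) \<Rightarrow> pt \<Rightarrow> complex" where
  "Pfun F p = Dz1 (Dz1 (Dzb1 (cF F))) p / Dz1 (Dzb1 (cF F)) p"

definition Kop :: "(pt \<Rightarrow> real) \<Rightarrow> (pt \<Rightarrow> complex) \<Rightarrow> pt \<Rightarrow> complex" where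
  "Kop F g p = slant F p * Dz1 g p + Dz2 g p"

definition I0 :: "(pt \<Rightarrow> real) \<Rightarrow> pt \<Rightarrow> complex" where
  "I0 F p = (let k = slant F; kb = (\<lambda>q. cnj (k q)); D = Dzb1 k in
      - 1/3 * Kop F (Dzb1 D) p / (D p)^2
      + 1/3 * Kop F D p * Dzb1 D p / (D p)^3
      + 2/3 * Dz1 (Dz1 kb) p / Dz1 kb p
      + 2/3 * Dz1 D p / D p)"

definition V0 :: "(pt \<Rightarrow> real) \<Rightarrow> pt \<Rightarrow> complex" where
  "V0 F p = (let k = slant F; D = Dzb1 k; Pb = (\<lambda>q. cnj (Pfun F q)) in
      - 1/3 * Dzb1 (Dzb1 D) p / D p
      + 5/9 * (Dzb1 D p / D p)^2
      - 1/9 * Dzb1 D p * Pb p / D p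
      + 1/3 * Dzb1 Pb p
      - 1/9 * Pb p * Pb p)"

definition Bfun :: "(pt \<Rightarrow> real) \<Rightarrow> pt \<Rightarrow> complex" where
  "Bfun F p = (let D = Dzb1 (slant F) in
      1/3 * (Dzb1 D p / D p - cnj (Pfun F p)))"

definition Q0 :: "(pt \<Rightarrow> real) \<Rightarrow> pt \<Rightarrow> complex" where
  "Q0 F p =
      1/2 * Dzb1 (I0 F) p + 1/2 * Bfun F p * I0 F p
      + cnj (Bfun F p) * cnj (I0 F p)
      - 1/2 * Kop F (V0 F) p / Dzb1 (slant F) p"

end

theory Submission
  imports Defs
begin

lemma phi_rec:
  fixes x h :: real
  shows "(x+h)^(Suc n) - x^(Suc n) - real (Suc n)*h*x^n =
     (x+h)*((x+h)^n - x^n - real n*h*x^(n-1)) + real n*h^2*x^(n-1)"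
proof (cases n)
  case 0 then show ?thesis by simp
next
  case (Suc m)
  then show ?thesis by (simp add: algebra_simps power2_eq_square)
qed

lemma phi_bound:
  fixes x h \<rho> :: real
  assumes "\<bar>x\<bar> \<le> \<rho>" "\<bar>x+h\<bar> \<le> \<rho>" "0 < \<rho>"
  shows "\<bar>(x+h)^n - x^n - real n*h*x^(n-1)\<bar> * \<rho>^2 \<le> real n^2 * h^2 * \<rho>^n"
proof (induction n)
  case 0 then show ?case by simp
next
  case (Suc n)
  define \<phi> where "\<phi> = (x+h)^n - x^n - real n*h*x^(n-1)"
  have r: "(x+h)^(Suc n) - x^(Suc n) - real (Suc n)*h*x^n = (x+h)*\<phi> + real n*h^2*x^(n-1)"
    unfolding \<phi>_def by (rule phi_rec)
  have IH: "\<bar>\<phi>\<bar> * \<rho>^2 \<le> real n^2 * h^2 * \<rho>^n" using Suc \<phi>_def by simp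
  have t1: "\<bar>(x+h)*\<phi>\<bar> * \<rho>^2 \<le> \<rho> * (real n^2 * h^2 * \<rho>^n)"
  proof -
    have "\<bar>(x+h)*\<phi>\<bar> * \<rho>^2 = \<bar>x+h\<bar> * (\<bar>\<phi>\<bar> * \<rho>^2)" by (simp add: abs_mult)
    also have "\<dots> \<le> \<rho> * (real n^2 * h^2 * \<rho>^n)"
      by (rule mult_mono) (use assms IH in auto)
    finally show ?thesis .
  qed
  have t2: "\<bar>real n*h^2*x^(n-1)\<bar> * \<rho>^2 \<le> real n * h^2 * \<rho>^(Suc n)"
  proof (cases n)
    case 0 then show ?thesis by simp
  next
    case (Suc m)
    have "\<bar>x\<bar>^m \<le> \<rho>^m" by (rule power_mono) (use assms in auto)
    then have "\<bar>x^m\<bar> * \<rho>^2 \<le> \<rho>^(Suc (Suc m))" using assms by (simp add: power_abs power2_eq_square mult_ac mult_left_mono)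
    then have "real n*h^2* (\<bar>x^m\<bar> * \<rho>^2) \<le> real n * h^2 * \<rho>^(Suc (Suc m))"
      by (intro mult_left_mono) auto
    then show ?thesis using Suc by (simp add: abs_mult mult_ac)
  qed
  have "\<bar>(x+h)^(Suc n) - x^(Suc n) - real (Suc n)*h*x^(Suc n - 1)\<bar> * \<rho>^2
       \<le> \<bar>(x+h)*\<phi>\<bar> * \<rho>^2 + \<bar>real n*h^2*x^(n-1)\<bar> * \<rho>^2"
    using r by (simp add: distrib_right[symmetric] abs_triangle_ineq mult_right_mono)
  also have "\<dots> \<le> \<rho> * (real n^2 * h^2 * \<rho>^n) + real n * h^2 * \<rho>^(Suc n)"
    using t1 t2 by linarith
  also have "\<dots> \<le> real (Suc n)^2 * h^2 * \<rho>^(Suc n)"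
  proof -
    have "\<rho> * (real n^2 * h^2 * \<rho>^n) + real n * h^2 * \<rho>^(Suc n) = (real n^2 + real n) * (h^2 * \<rho>^(Suc n))"
      by (simp add: algebra_simps)
    also have "\<dots> \<le> real (Suc n)^2 * (h^2 * \<rho>^(Suc n))"
      by (rule mult_right_mono) (use assms in \<open>auto simp: power2_eq_square algebra_simps\<close>, metis assms(3) less_le mult_nonneg_nonneg zero_le_power zero_le_square mult.commute mult.left_commute)
    finally show ?thesis by (simp add: mult_ac)
  qed
  finally show ?case .
qed


type_synonym idx = "nat \<times> nat \<times> nat \<times> nat"

definition ix :: "idx \<Rightarrow> nat \<Rightarrow> nat" where
  "ix \<alpha> i = (case \<alpha> of (a,b,d,e) \<Rightarrow> if i=0 then a else if i=1 then b else if i=2 then d else e)"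
definition inc :: "nat \<Rightarrow> idx \<Rightarrow> idx" where
  "inc i \<alpha> = (case \<alpha> of (a,b,d,e) \<Rightarrow> if i=0 then (Suc a,b,d,e) else if i=1 then (a,Suc b,d,e)
      else if i=2 then (a,b,Suc d,e) else (a,b,d,Suc e))"
definition deg :: "idx \<Rightarrow> nat" where "deg \<alpha> = (\<Sum>j<4. ix \<alpha> j)"
definition crd :: "pt \<Rightarrow> nat \<Rightarrow> real" where
  "crd q i = (if i=0 then Re (fst q) else if i=1 then Im (fst q) else if i=2 then Re (snd q) else Im (snd q))"
definition dirv :: "nat \<Rightarrow> pt" where
  "dirv i = (if i=0 then (1,0) else if i=1 then (\<i>,0) else if i=2 then (0,1) else (0,\<i>))"
definition mon :: "pt \<Rightarrow> idx \<Rightarrow> pt \<Rightarrow> real" where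
  "mon p \<alpha> q = (\<Prod>j<4. crd (q - p) j ^ ix \<alpha> j)"
definition rst :: "pt \<Rightarrow> nat \<Rightarrow> idx \<Rightarrow> pt \<Rightarrow> real" where
  "rst p i \<alpha> q = (\<Prod>j\<in>{..<4}-{i}. crd (q - p) j ^ ix \<alpha> j)"

lemma four_cases: "(i::nat) < 4 \<Longrightarrow> i = 0 \<or> i = 1 \<or> i = 2 \<or> i = 3" by auto

lemma ix_inc: "i < 4 \<Longrightarrow> j < 4 \<Longrightarrow> ix (inc i \<alpha>) j = ix \<alpha> j + (if j = i then 1 else 0)"
  by (cases \<alpha>) (auto simp: ix_def inc_def)

lemma deg_inc: "i < 4 \<Longrightarrow> deg (inc i \<alpha>) = Suc (deg \<alpha>)"
proof -
  assume i: "i < 4"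
  have "deg (inc i \<alpha>) = (\<Sum>j<4. ix \<alpha> j + (if j = i then 1 else 0))"
    unfolding deg_def by (rule sum.cong) (auto simp: ix_inc i)
  also have "\<dots> = Suc (deg \<alpha>)" using i by (simp add: sum.distrib deg_def)
  finally show ?thesis .
qed

lemma deg_tuple: "deg (a,b,d,e) = a+b+d+e"
  by (simp add: deg_def ix_def eval_nat_numeral)

lemma inj_inc: "i < 4 \<Longrightarrow> inj (inc i)"
  by (auto simp: inj_def inc_def split: prod.splits if_splits)

lemma range_inc: "i < 4 \<Longrightarrow> range (inc i) = {\<alpha>. ix \<alpha> i \<ge> 1}"
proof -
  assume i: "i < 4"
  have "\<alpha> \<in> range (inc i)" if "ix \<alpha> i \<ge> 1" for \<alpha>
  proof -
    obtain a b d e where \<alpha>: "\<alpha> = (a,b,d,e)" by (cases \<alpha>) auto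
    show ?thesis using four_cases[OF i] that
      apply (elim disjE)
      subgoal by (rule image_eqI[of _ _ "(a-1,b,d,e)"]) (auto simp: \<alpha> inc_def ix_def)
      subgoal by (rule image_eqI[of _ _ "(a,b-1,d,e)"]) (auto simp: \<alpha> inc_def ix_def)
      subgoal by (rule image_eqI[of _ _ "(a,b,d-1,e)"]) (auto simp: \<alpha> inc_def ix_def)
      subgoal by (rule image_eqI[of _ _ "(a,b,d,e-1)"]) (auto simp: \<alpha> inc_def ix_def)
      done
  qed
  then show ?thesis using i by (auto simp: ix_inc)
qed

lemma crd_add: "crd (q + r) j = crd q j + crd r j"
  by (simp add: crd_def)
lemma crd_diff: "crd (q - r) j = crd q j - crd r j"
  by (simp add: crd_def)
lemma crd_dirv: "i < 4 \<Longrightarrow> j < 4 \<Longrightarrow> crd (t *\<^sub>R dirv i) j = (if j = i then t else 0)"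
  using four_cases[of i] four_cases[of j] by (auto simp: crd_def dirv_def)

lemma mon_split: "i < 4 \<Longrightarrow> mon p \<alpha> q = crd (q - p) i ^ ix \<alpha> i * rst p i \<alpha> q"
  unfolding mon_def rst_def by (subst prod.remove[of _ i]) auto

lemma rst_move: "i < 4 \<Longrightarrow> rst p i \<alpha> (q + t *\<^sub>R dirv i) = rst p i \<alpha> q"
  unfolding rst_def
  by (intro prod.cong refl) (auto simp: crd_diff crd_add crd_dirv)

lemma crd_move: "i < 4 \<Longrightarrow> crd (q + t *\<^sub>R dirv i - p) i = crd (q - p) i + t"
  by (simp add: crd_diff crd_add crd_dirv)

lemma crd_move_other: "i < 4 \<Longrightarrow> j < 4 \<Longrightarrow> j \<noteq> i \<Longrightarrow> crd (q + t *\<^sub>R dirv i - p) j = crd (q - p) j"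
  by (simp add: crd_diff crd_add crd_dirv)

lemma rst_inc: "i < 4 \<Longrightarrow> rst p i (inc i \<alpha>) q = rst p i \<alpha> q"
  unfolding rst_def by (intro prod.cong refl) (auto simp: ix_inc)

lemma prod_pow_bound:
  fixes x :: "nat \<Rightarrow> real"
  assumes "\<And>j. j \<in> S \<Longrightarrow> \<bar>x j\<bar> \<le> \<rho>"
  shows "\<bar>\<Prod>j\<in>S. x j ^ n j\<bar> \<le> \<rho> ^ (\<Sum>j\<in>S. n j)"
proof -
  have "\<bar>\<Prod>j\<in>S. x j ^ n j\<bar> = (\<Prod>j\<in>S. \<bar>x j\<bar> ^ n j)" by (simp add: abs_prod power_abs)
  also have "\<dots> \<le> (\<Prod>j\<in>S. \<rho> ^ n j)"
    by (intro prod_mono conjI power_mono) (use assms in auto)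
  also have "\<dots> = \<rho> ^ (\<Sum>j\<in>S. n j)" by (simp add: power_sum)
  finally show ?thesis .
qed

lemma mon_bound:
  assumes "\<And>j. j < 4 \<Longrightarrow> \<bar>crd (q - p) j\<bar> \<le> \<rho>"
  shows "\<bar>mon p \<alpha> q\<bar> \<le> \<rho> ^ deg \<alpha>"
  unfolding mon_def deg_def by (rule prod_pow_bound) (use assms in auto)

lemma rst_bound:
  assumes "\<And>j. j < 4 \<Longrightarrow> \<bar>crd (q - p) j\<bar> \<le> \<rho>" "i < 4"
  shows "\<bar>rst p i \<alpha> q\<bar> * \<rho> ^ ix \<alpha> i \<le> \<rho> ^ deg \<alpha>"
proof -
  have r0: "0 \<le> \<rho>" using assms(1)[of 0] by auto
  have "\<bar>rst p i \<alpha> q\<bar> \<le> \<rho> ^ (\<Sum>j\<in>{..<4}-{i}. ix \<alpha> j)"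
    unfolding rst_def by (rule prod_pow_bound) (use assms in auto)
  then have "\<bar>rst p i \<alpha> q\<bar> * \<rho> ^ ix \<alpha> i \<le> \<rho> ^ (\<Sum>j\<in>{..<4}-{i}. ix \<alpha> j) * \<rho> ^ ix \<alpha> i"
    by (rule mult_right_mono) (use r0 in simp)
  also have "\<dots> = \<rho> ^ deg \<alpha>"
    unfolding deg_def using assms(2)
    by (subst (2) sum.remove[of _ i]) (auto simp: power_add mult.commute)
  finally show ?thesis .
qed


lemma has_sum_diff':
  fixes f g :: "'a \<Rightarrow> 'b::topological_ab_group_add"
  assumes "(f has_sum a) A" "(g has_sum b) A"
  shows "((\<lambda>x. f x - g x) has_sum (a - b)) A"
proof -
  have "((\<lambda>x. - g x) has_sum (- b)) A" using assms(2) by (simp add: has_sum_uminus)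
  from has_sum_add[OF assms(1) this] show ?thesis by simp
qed

lemma n2_bounded:
  fixes r :: real assumes "0 \<le> r" "r < 1"
  shows "\<exists>C>0. \<forall>n. real n ^ 2 * r ^ n \<le> C"
proof -
  define t where "t = sqrt r"
  have t: "norm t < 1" using assms by (simp add: t_def real_sqrt_lt_1_iff)
  have "(\<lambda>n. of_nat n * t ^ n) \<longlonglongrightarrow> 0" by (rule powser_times_n_limit_0[OF t])
  then have "(\<lambda>n. (of_nat n * t ^ n) * (of_nat n * t ^ n)) \<longlonglongrightarrow> 0 * 0"
    by (intro tendsto_mult)
  moreover have "(of_nat n * t ^ n) * (of_nat n * t ^ n) = real n ^ 2 * r ^ n" for n
  proof -
    have "t^n * t^n = r^n" using assms by (simp add: t_def power_mult_distrib[symmetric] flip: power_add)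
    then show ?thesis by (simp add: power2_eq_square algebra_simps)
  qed
  ultimately have "(\<lambda>n. real n ^ 2 * r ^ n) \<longlonglongrightarrow> 0" by simp
  then have "Bseq (\<lambda>n. real n ^ 2 * r ^ n)" by (intro convergent_imp_Bseq) (auto simp: convergent_def)
  then obtain K where "K > 0" "\<forall>n. norm (real n ^ 2 * r ^ n) \<le> K" by (auto simp: Bseq_def)
  then show ?thesis by (intro exI[of _ K]) (auto dest: abs_le_D1)
qed

lemma summable_deg2:
  fixes c :: "idx \<Rightarrow> complex"
  assumes S: "(\<lambda>\<alpha>. norm (c \<alpha>) * s ^ deg \<alpha>) summable_on UNIV" and r: "0 < \<rho>" "\<rho> < s"
  shows "(\<lambda>\<alpha>. norm (c \<alpha>) * real (deg \<alpha>) ^ 2 * \<rho> ^ deg \<alpha>) summable_on UNIV"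
proof -
  obtain C where C: "C > 0" "\<And>n. real n ^ 2 * (\<rho>/s) ^ n \<le> C"
    using n2_bounded[of "\<rho>/s"] r by auto
  have "(\<lambda>\<alpha>. C * (norm (c \<alpha>) * s ^ deg \<alpha>)) summable_on UNIV"
    by (rule summable_on_cmult_right[OF S])
  then show ?thesis
  proof (rule summable_on_comparison_test)
    fix \<alpha> :: idx
    have "real (deg \<alpha>) ^ 2 * \<rho> ^ deg \<alpha> = (real (deg \<alpha>) ^ 2 * (\<rho>/s) ^ deg \<alpha>) * s ^ deg \<alpha>"
      using r by (simp add: power_divide)
    also have "\<dots> \<le> C * s ^ deg \<alpha>" using C r by (intro mult_right_mono) auto
    finally have "norm (c \<alpha>) * (real (deg \<alpha>) ^ 2 * \<rho> ^ deg \<alpha>) \<le> norm (c \<alpha>) * (C * s ^ deg \<alpha>)"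
      by (intro mult_left_mono) auto
    then show "norm (c \<alpha>) * real (deg \<alpha>) ^ 2 * \<rho> ^ deg \<alpha> \<le> C * (norm (c \<alpha>) * s ^ deg \<alpha>)"
      by (simp add: mult_ac)
    show "0 \<le> norm (c \<alpha>) * real (deg \<alpha>) ^ 2 * \<rho> ^ deg \<alpha>" using r by simp
  qed
qed

definition psrep :: "pt \<Rightarrow> real \<Rightarrow> (idx \<Rightarrow> complex) \<Rightarrow> (pt \<Rightarrow> complex) \<Rightarrow> bool" where
  "psrep p s c g \<longleftrightarrow> 0 < s \<and> (\<lambda>\<alpha>. norm (c \<alpha>) * s ^ deg \<alpha>) summable_on UNIV \<and>
     (\<forall>q. (\<forall>j<4. \<bar>crd (q - p) j\<bar> < s) \<longrightarrow> ((\<lambda>\<alpha>. c \<alpha> * of_real (mon p \<alpha> q)) has_sum g q) UNIV)"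

definition dc :: "nat \<Rightarrow> (idx \<Rightarrow> complex) \<Rightarrow> idx \<Rightarrow> complex" where
  "dc i c \<alpha> = of_nat (Suc (ix \<alpha> i)) * c (inc i \<alpha>)"

lemma pow_pred_bound:
  fixes x \<rho> :: real assumes "\<bar>x\<bar> \<le> \<rho>"
  shows "\<bar>real a * x^(a-1)\<bar> * \<rho> \<le> real a * \<rho>^a"
proof (cases a)
  case 0 then show ?thesis by simp
next
  case (Suc m)
  have "\<bar>x\<bar>^m \<le> \<rho>^m" by (rule power_mono) (use assms in auto)
  then have "(\<bar>x\<bar>^m * \<rho>) * real a \<le> (\<rho>^m * \<rho>) * real a"
    by (intro mult_right_mono) (use assms in auto)
  then show ?thesis using Suc by (simp add: abs_mult power_abs mult_ac)
qed

lemma ix_le_deg: "i < 4 \<Longrightarrow> ix \<alpha> i \<le> deg \<alpha>"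
  unfolding deg_def by (rule member_le_sum) auto

lemma ps_deriv:
  assumes P: "psrep p s c g" and s': "0 < s'" "s' < s" and i: "i < 4"
    and q: "\<forall>j<4. \<bar>crd (q - p) j\<bar> < s'"
  shows "\<exists>G. ((\<lambda>\<beta>. dc i c \<beta> * of_real (mon p \<beta> q)) has_sum G) UNIV \<and>
             ((\<lambda>t. g (q + t *\<^sub>R dirv i)) has_vector_derivative G) (at 0)"
proof -
  from P have s0: "0 < s" and S: "(\<lambda>\<alpha>. norm (c \<alpha>) * s ^ deg \<alpha>) summable_on UNIV"
    and rep: "\<And>q. (\<forall>j<4. \<bar>crd (q - p) j\<bar> < s) \<Longrightarrow> ((\<lambda>\<alpha>. c \<alpha> * of_real (mon p \<alpha> q)) has_sum g q) UNIV"
    by (auto simp: psrep_def)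
  define \<rho> where "\<rho> = (s + s') / 2"
  define \<delta> where "\<delta> = \<rho> - s'"
  have \<rho>: "0 < \<rho>" "\<rho> < s" "s' < \<rho>" using s' by (auto simp: \<rho>_def)
  have \<delta>: "0 < \<delta>" using \<rho> by (simp add: \<delta>_def)
  define x where "x = crd (q - p) i"
  define R where "R \<alpha> = rst p i \<alpha> q" for \<alpha>
  have qb: "\<bar>crd (q - p) j\<bar> \<le> \<rho>" if "j < 4" for j using q that \<rho> by force
  have xb: "\<bar>x\<bar> < s'" using q i by (simp add: x_def)
  have Rb: "\<bar>R \<alpha>\<bar> * \<rho> ^ ix \<alpha> i \<le> \<rho> ^ deg \<alpha>" for \<alpha>
    unfolding R_def by (rule rst_bound) (use qb i in auto)
  have Sm: "(\<lambda>\<alpha>. norm (c \<alpha>) * real (deg \<alpha>) ^ 2 * \<rho> ^ deg \<alpha>) summable_on UNIV"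
    by (rule summable_deg2[OF S \<rho>(1,2)])
  define Mv where "Mv = infsum (\<lambda>\<alpha>. norm (c \<alpha>) * real (deg \<alpha>) ^ 2 * \<rho> ^ deg \<alpha>) UNIV"
  have Mv: "((\<lambda>\<alpha>. norm (c \<alpha>) * real (deg \<alpha>) ^ 2 * \<rho> ^ deg \<alpha>) has_sum Mv) UNIV"
    using Sm by (simp add: Mv_def)
  have Mv0: "0 \<le> Mv" using Mv by (rule has_sum_nonneg) (use \<rho> in auto)
  define d where "d \<alpha> = c \<alpha> * of_real (real (ix \<alpha> i) * x ^ (ix \<alpha> i - 1) * R \<alpha>)" for \<alpha>
  have dsum: "d summable_on UNIV"
  proof (rule abs_summable_summable)
    have "(\<lambda>\<alpha>. (1/\<rho>) * (norm (c \<alpha>) * real (deg \<alpha>) ^ 2 * \<rho> ^ deg \<alpha>)) summable_on UNIV"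
      by (rule summable_on_cmult_right[OF Sm])
    then show "(\<lambda>\<alpha>. norm (d \<alpha>)) summable_on UNIV"
    proof (rule summable_on_comparison_test)
      fix \<alpha>
      define a where "a = ix \<alpha> i"
      have "\<bar>real a * x^(a-1)\<bar> * \<rho> \<le> real a * \<rho>^a" by (rule pow_pred_bound) (use xb \<rho> in auto)
      then have "(\<bar>real a * x^(a-1)\<bar> * \<rho>) * \<bar>R \<alpha>\<bar> \<le> (real a * \<rho>^a) * \<bar>R \<alpha>\<bar>"
        by (rule mult_right_mono) simp
      then have "\<bar>real a * x^(a-1)\<bar> * \<rho> * \<bar>R \<alpha>\<bar> \<le> real a * (\<rho>^a * \<bar>R \<alpha>\<bar>)"
        by (simp add: mult.assoc)
      also have "\<dots> \<le> real a * \<rho> ^ deg \<alpha>" using Rb[of \<alpha>] by (intro mult_left_mono) (auto simp: a_def mult.commute)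
      also have "\<dots> \<le> real (deg \<alpha>) ^ 2 * \<rho> ^ deg \<alpha>"
      proof -
        have "a \<le> deg \<alpha>" using ix_le_deg[OF i] by (simp add: a_def)
        then have "real a \<le> real (deg \<alpha>) ^ 2" by (simp add: power2_eq_square) (metis le_square nat_le_linear order_trans of_nat_le_iff of_nat_mult mult_le_mono)
        then show ?thesis using \<rho> by (intro mult_right_mono) auto
      qed
      finally have "\<bar>real a * x^(a-1) * R \<alpha>\<bar> \<le> (1/\<rho>) * (real (deg \<alpha>) ^ 2 * \<rho> ^ deg \<alpha>)"
        using \<rho> by (simp add: abs_mult field_simps)
      then have "norm (c \<alpha>) * \<bar>real a * x^(a-1) * R \<alpha>\<bar> \<le> norm (c \<alpha>) * ((1/\<rho>) * (real (deg \<alpha>) ^ 2 * \<rho> ^ deg \<alpha>))"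
        by (intro mult_left_mono) auto
      then show "norm (d \<alpha>) \<le> (1/\<rho>) * (norm (c \<alpha>) * real (deg \<alpha>) ^ 2 * \<rho> ^ deg \<alpha>)"
        unfolding d_def norm_mult norm_of_real by (simp add: a_def mult_ac)
    qed (use \<rho> in auto)
  qed
  define G where "G = infsum d UNIV"
  have dG: "(d has_sum G) UNIV" using dsum by (simp add: G_def)
  have move: "mon p \<alpha> (q + h *\<^sub>R dirv i) = (x + h) ^ ix \<alpha> i * R \<alpha>" for h \<alpha>
    using i by (simp add: mon_split[OF i] crd_move rst_move x_def R_def)
  have mon0: "mon p \<alpha> q = x ^ ix \<alpha> i * R \<alpha>" for \<alpha>
    using i by (simp add: mon_split[OF i] x_def R_def)
  have err: "norm (g (q + h *\<^sub>R dirv i) - g q - of_real h * G) \<le> h^2 / \<rho>^2 * Mv" if h: "\<bar>h\<bar> < \<delta>" for h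
  proof -
    have inb: "\<forall>j<4. \<bar>crd (q + h *\<^sub>R dirv i - p) j\<bar> < s"
    proof (intro allI impI)
      fix j :: nat assume j: "j < 4"
      show "\<bar>crd (q + h *\<^sub>R dirv i - p) j\<bar> < s"
      proof (cases "j = i")
        case True
        then show ?thesis using crd_move[OF i, of q h p] xb h \<rho> by (simp add: x_def \<delta>_def)
      next
        case False
        then show ?thesis using crd_move_other[OF i j False, of q h p] q j \<rho> by force
      qed
    qed
    have inb0: "\<forall>j<4. \<bar>crd (q - p) j\<bar> < s" using q \<rho> by force
    have h1: "((\<lambda>\<alpha>. c \<alpha> * of_real ((x + h) ^ ix \<alpha> i * R \<alpha>)) has_sum g (q + h *\<^sub>R dirv i)) UNIV"
      using rep[OF inb] by (simp add: move)
    have h0: "((\<lambda>\<alpha>. c \<alpha> * of_real (x ^ ix \<alpha> i * R \<alpha>)) has_sum g q) UNIV"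
      using rep[OF inb0] by (simp add: mon0)
    have hd: "((\<lambda>\<alpha>. of_real h * d \<alpha>) has_sum of_real h * G) UNIV"
      by (rule has_sum_cmult_right[OF dG])
    have hs: "((\<lambda>\<alpha>. c \<alpha> * of_real (((x + h) ^ ix \<alpha> i - x ^ ix \<alpha> i - real (ix \<alpha> i) * h * x ^ (ix \<alpha> i - 1)) * R \<alpha>))
       has_sum (g (q + h *\<^sub>R dirv i) - g q - of_real h * G)) UNIV"
    proof -
      have "((\<lambda>\<alpha>. c \<alpha> * of_real ((x + h) ^ ix \<alpha> i * R \<alpha>) - c \<alpha> * of_real (x ^ ix \<alpha> i * R \<alpha>) - of_real h * d \<alpha>)
        has_sum (g (q + h *\<^sub>R dirv i) - g q - of_real h * G)) UNIV"
        by (intro has_sum_diff' h1 h0 hd)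
      then show ?thesis by (simp add: d_def algebra_simps)
    qed
    have hb: "((\<lambda>\<alpha>. h^2 / \<rho>^2 * (norm (c \<alpha>) * real (deg \<alpha>) ^ 2 * \<rho> ^ deg \<alpha>)) has_sum h^2 / \<rho>^2 * Mv) UNIV"
      by (rule has_sum_cmult_right[OF Mv])
    show ?thesis
    proof (rule norm_infsum_le[OF hs hb])
      fix \<alpha>
      define a where "a = ix \<alpha> i"
      define \<phi> where "\<phi> = (x + h) ^ a - x ^ a - real a * h * x ^ (a - 1)"
      have xh: "\<bar>x + h\<bar> \<le> \<rho>" using xb h by (simp add: \<delta>_def)
      have pb: "\<bar>\<phi>\<bar> * \<rho>^2 \<le> real a^2 * h^2 * \<rho>^a"
        unfolding \<phi>_def by (rule phi_bound) (use xb xh \<rho> in auto)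
      have "\<bar>\<phi> * R \<alpha>\<bar> * \<rho>^2 = (\<bar>\<phi>\<bar> * \<rho>^2) * \<bar>R \<alpha>\<bar>" by (simp add: abs_mult mult_ac)
      also have "\<dots> \<le> (real a^2 * h^2 * \<rho>^a) * \<bar>R \<alpha>\<bar>" by (rule mult_right_mono[OF pb]) auto
      also have "\<dots> = real a^2 * h^2 * (\<bar>R \<alpha>\<bar> * \<rho>^a)" by (simp add: mult_ac)
      also have "\<dots> \<le> real a^2 * h^2 * \<rho> ^ deg \<alpha>"
        by (rule mult_left_mono) (use Rb[of \<alpha>] in \<open>auto simp: a_def\<close>)
      also have "\<dots> \<le> real (deg \<alpha>)^2 * h^2 * \<rho> ^ deg \<alpha>"
      proof -
        have "a \<le> deg \<alpha>" using ix_le_deg[OF i] by (simp add: a_def)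
        then have "real a^2 \<le> real (deg \<alpha>)^2" by (simp add: power_mono)
        then show ?thesis using \<rho> by (intro mult_right_mono) auto
      qed
      finally have "\<bar>\<phi> * R \<alpha>\<bar> \<le> h^2 / \<rho>^2 * (real (deg \<alpha>)^2 * \<rho> ^ deg \<alpha>)"
        using \<rho> by (simp add: field_simps)
      then have "norm (c \<alpha>) * \<bar>\<phi> * R \<alpha>\<bar> \<le> norm (c \<alpha>) * (h^2 / \<rho>^2 * (real (deg \<alpha>)^2 * \<rho> ^ deg \<alpha>))"
        by (intro mult_left_mono) auto
      then show "norm (c \<alpha> * of_real (((x + h) ^ ix \<alpha> i - x ^ ix \<alpha> i - real (ix \<alpha> i) * h * x ^ (ix \<alpha> i - 1)) * R \<alpha>))
         \<le> h^2 / \<rho>^2 * (norm (c \<alpha>) * real (deg \<alpha>) ^ 2 * \<rho> ^ deg \<alpha>)"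
        unfolding norm_mult norm_of_real by (simp add: \<phi>_def a_def mult_ac)
    qed
  qed
  have deriv: "((\<lambda>t. g (q + t *\<^sub>R dirv i)) has_vector_derivative G) (at 0)"
    unfolding has_vector_derivative_def has_derivative_at_alt
  proof (intro conjI allI impI)
    show "bounded_linear (\<lambda>t. t *\<^sub>R G)" by (rule bounded_linear_scaleR_left)
    fix e :: real assume e: "0 < e"
    define dd where "dd = min \<delta> (e * \<rho>^2 / (Mv + 1))"
    have dd: "0 < dd" using \<delta> e \<rho> Mv0 by (simp add: dd_def)
    show "\<exists>d>0. \<forall>y. norm (y - 0) < d \<longrightarrow>
       norm (g (q + y *\<^sub>R dirv i) - g (q + 0 *\<^sub>R dirv i) - (y - 0) *\<^sub>R G) \<le> e * norm (y - 0)"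
    proof (intro exI[of _ dd] conjI allI impI dd)
      fix y :: real assume y: "norm (y - 0) < dd"
      then have y1: "\<bar>y\<bar> < \<delta>" and y2: "\<bar>y\<bar> < e * \<rho>^2 / (Mv + 1)" by (auto simp: dd_def)
      have "norm (g (q + y *\<^sub>R dirv i) - g q - of_real y * G) \<le> y^2 / \<rho>^2 * Mv" by (rule err[OF y1])
      also have "\<dots> = \<bar>y\<bar> * (\<bar>y\<bar> * Mv / \<rho>^2)" by (simp add: power2_eq_square abs_mult_self_eq)
      also have "\<dots> \<le> \<bar>y\<bar> * e"
      proof (rule mult_left_mono)
        have "\<bar>y\<bar> * Mv \<le> (e * \<rho>^2 / (Mv + 1)) * (Mv + 1)"
          using y2 Mv0 by (intro mult_mono) auto
        also have "\<dots> = e * \<rho>^2" using Mv0 by simp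
        finally show "\<bar>y\<bar> * Mv / \<rho>^2 \<le> e" using \<rho> by (simp add: field_simps)
      qed auto
      finally show "norm (g (q + y *\<^sub>R dirv i) - g (q + 0 *\<^sub>R dirv i) - (y - 0) *\<^sub>R G) \<le> e * norm (y - 0)"
        by (simp add: scaleR_conv_of_real mult.commute)
    qed
  qed
  have reidx: "((\<lambda>\<beta>. dc i c \<beta> * of_real (mon p \<beta> q)) has_sum G) UNIV"
  proof -
    have "(d has_sum G) (range (inc i))"
      using dG by (subst has_sum_cong_neutral[where T=UNIV and g=d]) (auto simp: range_inc[OF i] d_def)
    then have "((d \<circ> inc i) has_sum G) UNIV" by (simp add: has_sum_reindex[OF inj_inc[OF i]])
    moreover have "(d \<circ> inc i) \<beta> = dc i c \<beta> * of_real (mon p \<beta> q)" for \<beta>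
      using i by (simp add: d_def dc_def mon0 ix_inc R_def rst_inc)
    ultimately show ?thesis by (simp add: comp_def)
  qed
  show ?thesis using reidx deriv by blast
qed


coinductive good :: "pt set \<Rightarrow> (pt \<Rightarrow> complex) \<Rightarrow> bool" for U where
  goodI: "(\<And>p i. p \<in> U \<Longrightarrow> i < 4 \<Longrightarrow> (\<lambda>t. g (p + t *\<^sub>R dirv i)) differentiable (at 0)) \<Longrightarrow>
   (\<And>p i j. p \<in> U \<Longrightarrow> i < 4 \<Longrightarrow> j < 4 \<Longrightarrow>
       pdir (dirv i) (pdir (dirv j) g) p = pdir (dirv j) (pdir (dirv i) g) p) \<Longrightarrow>
   (\<And>i. i < 4 \<Longrightarrow> good U (pdir (dirv i) g)) \<Longrightarrow> good U g"

lemma good_diff: "good U g \<Longrightarrow> p \<in> U \<Longrightarrow> i < 4 \<Longrightarrow> (\<lambda>t. g (p + t *\<^sub>R dirv i)) differentiable (at 0)"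
  by (erule good.cases) auto
lemma good_comm: "good U g \<Longrightarrow> p \<in> U \<Longrightarrow> i < 4 \<Longrightarrow> j < 4 \<Longrightarrow>
   pdir (dirv i) (pdir (dirv j) g) p = pdir (dirv j) (pdir (dirv i) g) p"
  by (erule good.cases) auto
lemma good_pdir: "good U g \<Longrightarrow> i < 4 \<Longrightarrow> good U (pdir (dirv i) g)"
  by (erule good.cases) auto

lemma dc_comm: "i < 4 \<Longrightarrow> j < 4 \<Longrightarrow> dc i (dc j c) = dc j (dc i c)"
  apply (rule ext)
  subgoal for \<alpha>
    by (cases \<alpha>; use four_cases[of i] four_cases[of j] in \<open>auto simp: dc_def inc_def ix_def algebra_simps\<close>)
  done

lemma ps_step:
  assumes P: "psrep p s c g" and s': "0 < s'" "s' < s" and i: "i < 4"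
  shows "psrep p s' (dc i c) (pdir (dirv i) g)"
    and "\<And>q. \<forall>j<4. \<bar>crd (q - p) j\<bar> < s' \<Longrightarrow> (\<lambda>t. g (q + t *\<^sub>R dirv i)) differentiable (at 0)"
proof -
  from P have S: "(\<lambda>\<alpha>. norm (c \<alpha>) * s ^ deg \<alpha>) summable_on UNIV" by (simp add: psrep_def)
  have Sm: "(\<lambda>\<alpha>. norm (c \<alpha>) * real (deg \<alpha>) ^ 2 * s' ^ deg \<alpha>) summable_on UNIV"
    by (rule summable_deg2[OF S s'])
  define f where "f \<alpha> = norm (c \<alpha>) * real (ix \<alpha> i) * s' ^ (deg \<alpha> - 1)" for \<alpha>
  have fs: "f summable_on UNIV"
  proof -
    have "(\<lambda>\<alpha>. (1/s') * (norm (c \<alpha>) * real (deg \<alpha>) ^ 2 * s' ^ deg \<alpha>)) summable_on UNIV"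
      by (rule summable_on_cmult_right[OF Sm])
    then show ?thesis
    proof (rule summable_on_comparison_test)
      fix \<alpha>
      show "0 \<le> f \<alpha>" using s' by (simp add: f_def)
      have "real (ix \<alpha> i) * s' ^ (deg \<alpha> - 1) \<le> (1/s') * (real (deg \<alpha>) ^ 2 * s' ^ deg \<alpha>)"
      proof (cases "deg \<alpha>")
        case 0
        then have "ix \<alpha> i = 0" using ix_le_deg[OF i, of \<alpha>] by simp
        then show ?thesis using s' by simp
      next
        case (Suc m)
        have "real (ix \<alpha> i) \<le> real (deg \<alpha>) ^ 2"
        proof -
          have "ix \<alpha> i \<le> deg \<alpha>" by (rule ix_le_deg[OF i])
          also have "deg \<alpha> \<le> deg \<alpha> ^ 2" by (simp add: power2_eq_square)
          finally show ?thesis by (metis of_nat_le_iff of_nat_power)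
        qed
        then have "real (ix \<alpha> i) * s' ^ m \<le> real (deg \<alpha>) ^ 2 * s' ^ m"
          by (rule mult_right_mono) (use s' in simp)
        then show ?thesis using Suc s' by (simp add: field_simps)
      qed
      then have "norm (c \<alpha>) * (real (ix \<alpha> i) * s' ^ (deg \<alpha> - 1)) \<le> norm (c \<alpha>) * ((1/s') * (real (deg \<alpha>) ^ 2 * s' ^ deg \<alpha>))"
        by (rule mult_left_mono) simp
      then show "f \<alpha> \<le> (1/s') * (norm (c \<alpha>) * real (deg \<alpha>) ^ 2 * s' ^ deg \<alpha>)"
        by (simp add: f_def mult_ac)
    qed
  qed
  then have "f summable_on range (inc i)" by (rule summable_on_subset_banach) auto
  then have "(f \<circ> inc i) summable_on UNIV" by (simp add: summable_on_reindex[OF inj_inc[OF i]])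
  moreover have "(f \<circ> inc i) \<beta> = norm (dc i c \<beta>) * s' ^ deg \<beta>" for \<beta>
  proof -
    have "norm (of_nat (Suc (ix \<beta> i)) :: complex) = real (Suc (ix \<beta> i))" by (rule norm_of_nat)
    then show ?thesis using i by (simp add: f_def dc_def ix_inc deg_inc norm_mult del: of_nat_Suc)
  qed
  ultimately have S': "(\<lambda>\<beta>. norm (dc i c \<beta>) * s' ^ deg \<beta>) summable_on UNIV" by (simp add: comp_def)
  have val: "((\<lambda>\<beta>. dc i c \<beta> * of_real (mon p \<beta> q)) has_sum pdir (dirv i) g q) UNIV \<and>
      (\<lambda>t. g (q + t *\<^sub>R dirv i)) differentiable (at 0)"
    if q: "\<forall>j<4. \<bar>crd (q - p) j\<bar> < s'" for q
  proof -
    obtain G where G: "((\<lambda>\<beta>. dc i c \<beta> * of_real (mon p \<beta> q)) has_sum G) UNIV"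
      "((\<lambda>t. g (q + t *\<^sub>R dirv i)) has_vector_derivative G) (at 0)"
      using ps_deriv[OF P s' i q] by blast
    have "pdir (dirv i) g q = G" unfolding pdir_def by (rule vector_derivative_at[OF G(2)])
    then show ?thesis using G by (auto simp: differentiable_def has_vector_derivative_def)
  qed
  show "psrep p s' (dc i c) (pdir (dirv i) g)"
    unfolding psrep_def using s' S' val by auto
  show "\<And>q. \<forall>j<4. \<bar>crd (q - p) j\<bar> < s' \<Longrightarrow> (\<lambda>t. g (q + t *\<^sub>R dirv i)) differentiable (at 0)"
    using val by blast
qed

lemma psrep_val: "psrep p s c g \<Longrightarrow> \<forall>j<4. \<bar>crd (q - p) j\<bar> < s \<Longrightarrow>
   ((\<lambda>\<alpha>. c \<alpha> * of_real (mon p \<alpha> q)) has_sum g q) UNIV"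
  unfolding psrep_def by blast

lemma between:
  assumes "\<forall>j<4. \<bar>crd (q - p) j\<bar> < (s::real)"
  shows "\<exists>s'. 0 < s' \<and> s' < s \<and> (\<forall>j<4. \<bar>crd (q - p) j\<bar> < s')"
proof -
  define m where "m = Max ((\<lambda>j. \<bar>crd (q - p) j\<bar>) ` {..<4})"
  have m: "m < s" using assms unfolding m_def by (subst Max_less_iff) (auto simp: lessThan_empty_iff)
  have mj: "\<bar>crd (q - p) j\<bar> \<le> m" if "j < 4" for j unfolding m_def by (rule Max_ge) (use that in auto)
  have m0: "0 \<le> m" using mj[of 0] by auto
  show ?thesis
  proof (intro exI conjI allI impI)
    show "0 < (m + s)/2" using m m0 by simp
    show "(m + s)/2 < s" using m by simp
    fix j :: nat assume "j < 4"
    then show "\<bar>crd (q - p) j\<bar> < (m + s)/2" using mj[of j] m by simp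
  qed
qed

lemma psrep_good:
  assumes "\<forall>q\<in>U. \<exists>p s c. psrep p s c g \<and> (\<forall>j<4. \<bar>crd (q - p) j\<bar> < s)"
  shows "good U g"
  using assms
proof (coinduction arbitrary: g)
  case (good g)
  have A: "(\<lambda>t. g (q + t *\<^sub>R dirv i)) differentiable (at 0)" if qU: "q \<in> U" "i < 4" for q i
  proof -
    obtain p s c where pc: "psrep p s c g" "\<forall>j<4. \<bar>crd (q - p) j\<bar> < s" using good qU by blast
    obtain s' where s': "0 < s'" "s' < s" "\<forall>j<4. \<bar>crd (q - p) j\<bar> < s'" using between[OF pc(2)] by blast
    show ?thesis by (rule ps_step(2)[OF pc(1) s'(1,2) qU(2) s'(3)])
  qed
  have B: "pdir (dirv i) (pdir (dirv j) g) q = pdir (dirv j) (pdir (dirv i) g) q"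
    if qU: "q \<in> U" "i < 4" "j < 4" for q i j
  proof -
    obtain p s c where pc: "psrep p s c g" "\<forall>j<4. \<bar>crd (q - p) j\<bar> < s" using good qU by blast
    obtain s' where s': "0 < s'" "s' < s" "\<forall>j<4. \<bar>crd (q - p) j\<bar> < s'" using between[OF pc(2)] by blast
    obtain s'' where s'': "0 < s''" "s'' < s'" "\<forall>j<4. \<bar>crd (q - p) j\<bar> < s''" using between[OF s'(3)] by blast
    have Pj: "psrep p s' (dc j c) (pdir (dirv j) g)" by (rule ps_step(1)[OF pc(1) s'(1,2) qU(3)])
    have Pi: "psrep p s' (dc i c) (pdir (dirv i) g)" by (rule ps_step(1)[OF pc(1) s'(1,2) qU(2)])
    have Pij: "psrep p s'' (dc i (dc j c)) (pdir (dirv i) (pdir (dirv j) g))" by (rule ps_step(1)[OF Pj s''(1,2) qU(2)])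
    have Pji: "psrep p s'' (dc j (dc i c)) (pdir (dirv j) (pdir (dirv i) g))" by (rule ps_step(1)[OF Pi s''(1,2) qU(3)])
    have h1: "((\<lambda>\<alpha>. dc i (dc j c) \<alpha> * of_real (mon p \<alpha> q)) has_sum pdir (dirv i) (pdir (dirv j) g) q) UNIV"
      using psrep_val[OF Pij s''(3)] .
    have h2: "((\<lambda>\<alpha>. dc i (dc j c) \<alpha> * of_real (mon p \<alpha> q)) has_sum pdir (dirv j) (pdir (dirv i) g) q) UNIV"
      by (subst dc_comm[OF qU(2,3)]) (rule psrep_val[OF Pji s''(3)])
    show ?thesis using has_sum_unique[OF h1 h2] .
  qed
  have C: "\<forall>q\<in>U. \<exists>p s c. psrep p s c (pdir (dirv i) g) \<and> (\<forall>j<4. \<bar>crd (q - p) j\<bar> < s)" if "i < 4" for i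
  proof
    fix q assume "q \<in> U"
    obtain p s c where pc: "psrep p s c g" "\<forall>j<4. \<bar>crd (q - p) j\<bar> < s" using good \<open>q \<in> U\<close> by blast
    obtain s' where s': "0 < s'" "s' < s" "\<forall>j<4. \<bar>crd (q - p) j\<bar> < s'" using between[OF pc(2)] by blast
    show "\<exists>p s c. psrep p s c (pdir (dirv i) g) \<and> (\<forall>j<4. \<bar>crd (q - p) j\<bar> < s)"
      using ps_step(1)[OF pc(1) s'(1,2) that] s'(3) by blast
  qed
  show ?case
    apply (rule exI[of _ g])
    apply (intro conjI allI impI refl)
    subgoal by (rule A)
    subgoal by (rule B)
    subgoal for i by (rule disjI1, rule exI[of _ "pdir (dirv i) g"]) (use C in blast)
    done
qed



lemma abs_sum_real: "(f has_sum (y::real)) A \<Longrightarrow> (\<lambda>x. norm (f x)) summable_on A"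
  using has_sum_imp_summable summable_on_iff_abs_summable_on_real by blast

lemma analytic_psrep:
  assumes "real_analytic_on U F" "q \<in> U"
  shows "\<exists>p s c. psrep p s c (cF F) \<and> (\<forall>j<4. \<bar>crd (q - p) j\<bar> < s)"
proof -
  obtain r c where r: "r > 0" and rep: "\<forall>x\<in>ball q r.
          ((\<lambda>(a,b,d,e). c (a,b,d,e)
              * (Re (fst x) - Re (fst q)) ^ a * (Im (fst x) - Im (fst q)) ^ b
              * (Re (snd x) - Re (snd q)) ^ d * (Im (snd x) - Im (snd q)) ^ e)
           has_sum F x) UNIV"
    using assms(1)[unfolded real_analytic_on_def, rule_format, OF assms(2)] by (elim exE conjE) (rule that)
  define s where "s = r / 5"
  have s: "0 < s" using r by (simp add: s_def)
  have eq: "(\<lambda>(a,b,d,e). c (a,b,d,e)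
              * (Re (fst x) - Re (fst q)) ^ a * (Im (fst x) - Im (fst q)) ^ b
              * (Re (snd x) - Re (snd q)) ^ d * (Im (snd x) - Im (snd q)) ^ e) = (\<lambda>\<alpha>. c \<alpha> * mon q \<alpha> x)" for x
    by (rule ext) (auto simp: mon_def crd_def ix_def eval_nat_numeral mult_ac split: prod.splits)
  have inball: "x \<in> ball q r" if "\<forall>j<4. \<bar>crd (x - q) j\<bar> \<le> s" for x
  proof -
    have "dist q x = norm (x - q)" by (simp add: dist_norm norm_minus_commute)
    also have "\<dots> \<le> norm (fst (x - q)) + norm (snd (x - q))"
      by (metis norm_Pair_le prod.collapse)
    also have "\<dots> \<le> (\<bar>crd (x - q) 0\<bar> + \<bar>crd (x - q) 1\<bar>) + (\<bar>crd (x - q) 2\<bar> + \<bar>crd (x - q) 3\<bar>)"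
      by (intro add_mono) (use cmod_le[of "fst x - fst q"] cmod_le[of "snd x - snd q"] in \<open>auto simp: crd_def\<close>)
    also have "\<dots> \<le> 4 * s" using that[rule_format, of 0] that[rule_format, of 1] that[rule_format, of 2] that[rule_format, of 3] by linarith
    also have "\<dots> < r" using r by (simp add: s_def)
    finally show ?thesis by simp
  qed
  define q0 where "q0 = q + (Complex s s, Complex s s)"
  have "\<forall>j<4. \<bar>crd (q0 - q) j\<bar> \<le> s"
    using s by (auto simp: q0_def crd_def)
  then have qb: "q0 \<in> ball q r" by (rule inball)
  have "((\<lambda>\<alpha>. c \<alpha> * mon q \<alpha> q0) has_sum F q0) UNIV" by (subst eq[symmetric]) (rule rep[rule_format, OF qb])
  then have "(\<lambda>\<alpha>. norm (c \<alpha> * mon q \<alpha> q0)) summable_on UNIV"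
    by (rule abs_sum_real)
  moreover have "norm (c \<alpha> * mon q \<alpha> q0) = norm (complex_of_real (c \<alpha>)) * s ^ deg \<alpha>" for \<alpha>
  proof -
    have "mon q \<alpha> q0 = s ^ deg \<alpha>"
    proof -
      have cs: "crd (q0 - q) j = s" if "j < 4" for j using that by (auto simp: q0_def crd_def)
      have "mon q \<alpha> q0 = (\<Prod>j<4. s ^ ix \<alpha> j)" unfolding mon_def by (rule prod.cong) (auto simp: cs)
      also have "\<dots> = s ^ deg \<alpha>" by (simp add: deg_def power_sum)
      finally show ?thesis .
    qed
    then show ?thesis using s by (simp add: abs_mult)
  qed
  ultimately have S: "(\<lambda>\<alpha>. norm (complex_of_real (c \<alpha>)) * s ^ deg \<alpha>) summable_on UNIV" by simp
  have PS: "psrep q s (\<lambda>\<alpha>. complex_of_real (c \<alpha>)) (cF F)"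
    unfolding psrep_def
  proof (intro conjI s S allI impI)
    fix x assume "\<forall>j<4. \<bar>crd (x - q) j\<bar> < s"
    then have xb: "x \<in> ball q r" by (intro inball) (auto simp: less_imp_le)
    have "((\<lambda>\<alpha>. c \<alpha> * mon q \<alpha> x) has_sum F x) UNIV" by (subst eq[symmetric]) (rule rep[rule_format, OF xb])
    from has_sum_of_real[OF this] show "((\<lambda>\<alpha>. complex_of_real (c \<alpha>) * complex_of_real (mon q \<alpha> x)) has_sum cF F x) UNIV"
      by simp
  qed
  have Q: "\<forall>j<4. \<bar>crd (q - q) j\<bar> < s" using s by (simp add: crd_def)
  show ?thesis by (rule exI[of _ q], rule exI[of _ s], rule exI[of _ "\<lambda>\<alpha>. complex_of_real (c \<alpha>)"]) (use PS Q in simp)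
qed

lemma analytic_good: "real_analytic_on U F \<Longrightarrow> good U (cF F)"
proof -
  assume A: "real_analytic_on U F"
  show ?thesis by (rule psrep_good) (use analytic_psrep[OF A] in simp)
qed


definition ld :: "(pt \<Rightarrow> complex) \<Rightarrow> pt \<Rightarrow> pt \<Rightarrow> bool" where
  "ld f p v \<longleftrightarrow> (\<lambda>t::real. f (p + t *\<^sub>R v)) differentiable (at 0)"

lemma pdir_has: "ld f p v \<Longrightarrow> ((\<lambda>t. f (p + t *\<^sub>R v)) has_vector_derivative pdir v f p) (at 0)"
  unfolding ld_def pdir_def using vector_derivative_works by blast

lemma pdir_eqI: "((\<lambda>t. f (p + t *\<^sub>R v)) has_vector_derivative D) (at 0) \<Longrightarrow> pdir v f p = D"
  unfolding pdir_def by (rule vector_derivative_at)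

lemma ldI: "((\<lambda>t. f (p + t *\<^sub>R v)) has_vector_derivative D) (at 0) \<Longrightarrow> ld f p v"
  unfolding ld_def differentiable_def has_vector_derivative_def by blast

lemma ld_const: "ld (\<lambda>_. c) p v" by (rule ldI[OF has_vector_derivative_const])
lemma pdir_const: "pdir v (\<lambda>_. c) p = 0" by (rule pdir_eqI[OF has_vector_derivative_const])

lemma hvd_add: "ld f p v \<Longrightarrow> ld g p v \<Longrightarrow>
  ((\<lambda>t. f (p + t *\<^sub>R v) + g (p + t *\<^sub>R v)) has_vector_derivative (pdir v f p + pdir v g p)) (at 0)"
  by (intro has_vector_derivative_add pdir_has)
lemma ld_add: "ld f p v \<Longrightarrow> ld g p v \<Longrightarrow> ld (\<lambda>q. f q + g q) p v"
  using hvd_add ldI by fastforce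
lemma pdir_add: "ld f p v \<Longrightarrow> ld g p v \<Longrightarrow> pdir v (\<lambda>q. f q + g q) p = pdir v f p + pdir v g p"
  using hvd_add pdir_eqI by fastforce

lemma hvd_mult: "ld f p v \<Longrightarrow> ld g p v \<Longrightarrow>
  ((\<lambda>t. f (p + t *\<^sub>R v) * g (p + t *\<^sub>R v)) has_vector_derivative (pdir v f p * g p + f p * pdir v g p)) (at 0)"
  using has_vector_derivative_mult[OF pdir_has pdir_has, of f p v g] by (simp add: add.commute)
lemma ld_mult: "ld f p v \<Longrightarrow> ld g p v \<Longrightarrow> ld (\<lambda>q. f q * g q) p v"
  using hvd_mult ldI by fastforce
lemma pdir_mult: "ld f p v \<Longrightarrow> ld g p v \<Longrightarrow> pdir v (\<lambda>q. f q * g q) p = pdir v f p * g p + f p * pdir v g p"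
  using hvd_mult pdir_eqI by fastforce

lemma hvd_inv: "ld f p v \<Longrightarrow> f p \<noteq> 0 \<Longrightarrow>
  ((\<lambda>t. inverse (f (p + t *\<^sub>R v))) has_vector_derivative (- (pdir v f p * inverse (f p) ^ 2))) (at 0)"
proof -
  assume a: "ld f p v" "f p \<noteq> 0"
  have "((inverse \<circ> (\<lambda>t. f (p + t *\<^sub>R v))) has_vector_derivative (pdir v f p * - (inverse (f p) ^ Suc (Suc 0)))) (at 0)"
    by (rule field_vector_diff_chain_at[OF pdir_has[OF a(1)]]) (use DERIV_inverse[of "f p" UNIV] a in simp)
  then show ?thesis by (simp add: comp_def power2_eq_square)
qed
lemma ld_inv: "ld f p v \<Longrightarrow> f p \<noteq> 0 \<Longrightarrow> ld (\<lambda>q. inverse (f q)) p v"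
  using hvd_inv ldI by fastforce
lemma pdir_inv: "ld f p v \<Longrightarrow> f p \<noteq> 0 \<Longrightarrow> pdir v (\<lambda>q. inverse (f q)) p = - (pdir v f p * inverse (f p) ^ 2)"
  using hvd_inv pdir_eqI by fastforce

lemma hvd_cnj: "ld f p v \<Longrightarrow> ((\<lambda>t. cnj (f (p + t *\<^sub>R v))) has_vector_derivative cnj (pdir v f p)) (at 0)"
  by (intro has_vector_derivative_cnj pdir_has)
lemma ld_cnj: "ld f p v \<Longrightarrow> ld (\<lambda>q. cnj (f q)) p v"
  using hvd_cnj ldI by fastforce
lemma pdir_cnj: "ld f p v \<Longrightarrow> pdir v (\<lambda>q. cnj (f q)) p = cnj (pdir v f p)"
  using hvd_cnj pdir_eqI by fastforce

lemma ld_uminus: "ld f p v \<Longrightarrow> ld (\<lambda>q. - f q) p v"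
  using has_vector_derivative_minus[OF pdir_has] ldI by fastforce
lemma pdir_uminus: "ld f p v \<Longrightarrow> pdir v (\<lambda>q. - f q) p = - pdir v f p"
  using has_vector_derivative_minus[OF pdir_has] pdir_eqI by fastforce

lemma line_open: "open U \<Longrightarrow> open {t::real. p + t *\<^sub>R v \<in> U}" for U :: "pt set"
proof -
  assume "open U"
  have "open ((\<lambda>t::real. p + t *\<^sub>R v) -` U)"
    by (rule continuous_open_vimage[OF \<open>open U\<close>]) (intro continuous_add continuous_const continuous_scaleR continuous_ident)
  then show ?thesis by (simp add: vimage_def)
qed

lemma local_hvd:
  fixes f g :: "pt \<Rightarrow> complex"
  assumes "open U" "p \<in> U" "\<forall>q\<in>U. f q = g q"
    "((\<lambda>t. f (p + t *\<^sub>R v)) has_vector_derivative D) (at 0)"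
  shows "((\<lambda>t. g (p + t *\<^sub>R v)) has_vector_derivative D) (at 0)"
proof -
  have o: "open {t::real. p + t *\<^sub>R v \<in> U}" by (rule line_open[OF assms(1)])
  have z: "(0::real) \<in> {t. p + t *\<^sub>R v \<in> U}" using assms(2) by simp
  show ?thesis by (rule has_vector_derivative_transform_within_open[OF assms(4) o z]) (use assms(3) in auto)
qed

lemma pdir_local:
  fixes f g :: "pt \<Rightarrow> complex"
  assumes "open U" "p \<in> U" "\<forall>q\<in>U. f q = g q"
  shows "pdir v f p = pdir v g p"
proof -
  have "(\<lambda>D. ((\<lambda>t. f (p + t *\<^sub>R v)) has_vector_derivative D) (at 0)) =
        (\<lambda>D. ((\<lambda>t. g (p + t *\<^sub>R v)) has_vector_derivative D) (at 0))"
  proof (intro ext iffI)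
    fix D
    show "((\<lambda>t. f (p + t *\<^sub>R v)) has_vector_derivative D) (at 0) \<Longrightarrow> ((\<lambda>t. g (p + t *\<^sub>R v)) has_vector_derivative D) (at 0)"
      by (rule local_hvd[OF assms])
    show "((\<lambda>t. g (p + t *\<^sub>R v)) has_vector_derivative D) (at 0) \<Longrightarrow> ((\<lambda>t. f (p + t *\<^sub>R v)) has_vector_derivative D) (at 0)"
      by (rule local_hvd[OF assms(1,2)]) (use assms(3) in auto)
  qed
  then show ?thesis unfolding pdir_def vector_derivative_def by simp
qed

lemma ld_local:
  fixes f g :: "pt \<Rightarrow> complex"
  assumes "open U" "p \<in> U" "\<forall>q\<in>U. g q = f q" "ld f p v"
  shows "ld g p v"
proof -
  have "((\<lambda>t. g (p + t *\<^sub>R v)) has_vector_derivative pdir v f p) (at 0)"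
    by (rule local_hvd[OF assms(1,2) _ pdir_has[OF assms(4)]]) (use assms(3) in auto)
  then show ?thesis by (rule ldI)
qed

inductive gexp :: "pt set \<Rightarrow> (pt \<Rightarrow> complex) \<Rightarrow> bool" for U where
  gbase: "good U g \<Longrightarrow> gexp U g"
| gconst: "gexp U (\<lambda>_. c)"
| gadd: "gexp U f \<Longrightarrow> gexp U g \<Longrightarrow> gexp U (\<lambda>q. f q + g q)"
| gmult: "gexp U f \<Longrightarrow> gexp U g \<Longrightarrow> gexp U (\<lambda>q. f q * g q)"
| ginv: "gexp U f \<Longrightarrow> (\<forall>q\<in>U. f q \<noteq> 0) \<Longrightarrow> gexp U (\<lambda>q. inverse (f q))"
| gcnj: "gexp U f \<Longrightarrow> gexp U (\<lambda>q. cnj (f q))"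
| gcong: "gexp U f \<Longrightarrow> (\<forall>q\<in>U. g q = f q) \<Longrightarrow> gexp U g"

lemma gexp_props:
  assumes "open U" "gexp U g"
  shows "(\<forall>p\<in>U. \<forall>i<4. ld g p (dirv i)) \<and> (\<forall>i<4. gexp U (pdir (dirv i) g))"
  using assms(2)
proof (induction rule: gexp.induct)
  case (gbase g)
  then show ?case using good_diff good_pdir by (auto simp: ld_def intro: gexp.gbase)
next
  case (gconst c)
  have "gexp U (pdir (dirv i) (\<lambda>_. c))" for i
    by (rule gcong[OF gexp.gconst[of U 0]]) (simp add: pdir_const)
  then show ?case by (simp add: ld_const)
next
  case (gadd f g)
  have "gexp U (pdir (dirv i) (\<lambda>q. f q + g q))" if "i < 4" for i
    by (rule gcong[OF gexp.gadd[of U "pdir (dirv i) f" "pdir (dirv i) g"]])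
       (use gadd that in \<open>auto simp: pdir_add\<close>)
  then show ?case using gadd by (auto simp: ld_add)
next
  case (gmult f g)
  have "gexp U (pdir (dirv i) (\<lambda>q. f q * g q))" if "i < 4" for i
    by (rule gcong[OF gexp.gadd[OF gexp.gmult[of U "pdir (dirv i) f" g] gexp.gmult[of U f "pdir (dirv i) g"]]])
       (use gmult that in \<open>auto simp: pdir_mult\<close>)
  then show ?case using gmult by (auto simp: ld_mult)
next
  case (ginv f)
  have "gexp U (pdir (dirv i) (\<lambda>q. inverse (f q)))" if "i < 4" for i
  proof -
    have "gexp U (\<lambda>q. (-1) * (pdir (dirv i) f q * (inverse (f q) * inverse (f q))))"
      using ginv that by (intro gexp.gmult gexp.gconst gexp.ginv) auto
    then show ?thesis
      by (rule gcong) (use ginv that in \<open>auto simp: pdir_inv power2_eq_square\<close>)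
  qed
  then show ?case using ginv by (auto simp: ld_inv)
next
  case (gcnj f)
  have "gexp U (pdir (dirv i) (\<lambda>q. cnj (f q)))" if "i < 4" for i
    by (rule gcong[OF gexp.gcnj[of U "pdir (dirv i) f"]]) (use gcnj that in \<open>auto simp: pdir_cnj\<close>)
  then show ?case using gcnj by (auto simp: ld_cnj)
next
  case (gcong f g)
  have "gexp U (pdir (dirv i) g)" if "i < 4" for i
    by (rule gexp.gcong[of U "pdir (dirv i) f"]) (use gcong that assms(1) pdir_local in \<open>auto\<close>)
  moreover have "ld g p (dirv i)" if "p \<in> U" "i < 4" for p i
    by (rule ld_local[OF assms(1) that(1)]) (use gcong that in auto)
  ultimately show ?case by auto
qed

lemma gexp_ld: "open U \<Longrightarrow> gexp U g \<Longrightarrow> p \<in> U \<Longrightarrow> i < 4 \<Longrightarrow> ld g p (dirv i)"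
  using gexp_props by blast
lemma gexp_pdir: "open U \<Longrightarrow> gexp U g \<Longrightarrow> i < 4 \<Longrightarrow> gexp U (pdir (dirv i) g)"
  using gexp_props by blast

lemma gexp_comm:
  assumes U: "open U" and g: "gexp U g"
  shows "\<forall>p\<in>U. \<forall>i<4. \<forall>j<4. pdir (dirv i) (pdir (dirv j) g) p = pdir (dirv j) (pdir (dirv i) g) p"
  using g
proof (induction rule: gexp.induct)
  case (gbase g)
  then show ?case using good_comm by blast
next
  case (gconst c)
  then show ?case by (simp add: pdir_const)
next
  case (gadd f g)
  note gf = gadd(1) and gg = gadd(2)
  have e: "pdir (dirv i) (pdir (dirv j) (\<lambda>q. f q + g q)) p =
     pdir (dirv i) (pdir (dirv j) f) p + pdir (dirv i) (pdir (dirv j) g) p" if "p \<in> U" "i < 4" "j < 4" for p i j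
  proof -
    have "pdir (dirv i) (pdir (dirv j) (\<lambda>q. f q + g q)) p = pdir (dirv i) (\<lambda>q. pdir (dirv j) f q + pdir (dirv j) g q) p"
      by (rule pdir_local[OF U that(1)]) (use gf gg that U in \<open>auto simp: pdir_add gexp_ld\<close>)
    also have "\<dots> = pdir (dirv i) (pdir (dirv j) f) p + pdir (dirv i) (pdir (dirv j) g) p"
      by (rule pdir_add) (use gf gg that U in \<open>auto intro: gexp_ld gexp_pdir\<close>)
    finally show ?thesis .
  qed
  show ?case using gadd.IH by (auto simp: e)
next
  case (gmult f g)
  note gf = gmult(1) and gg = gmult(2)
  have e: "pdir (dirv i) (pdir (dirv j) (\<lambda>q. f q * g q)) p =
     (pdir (dirv i) (pdir (dirv j) f) p * g p + pdir (dirv j) f p * pdir (dirv i) g p) +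
     (pdir (dirv i) f p * pdir (dirv j) g p + f p * pdir (dirv i) (pdir (dirv j) g) p)" if "p \<in> U" "i < 4" "j < 4" for p i j
  proof -
    have ld1: "ld (pdir (dirv j) f) p (dirv i)" "ld (pdir (dirv j) g) p (dirv i)" "ld f p (dirv i)" "ld g p (dirv i)"
      using gf gg that U by (auto intro: gexp_ld gexp_pdir)
    have "pdir (dirv i) (pdir (dirv j) (\<lambda>q. f q * g q)) p = pdir (dirv i) (\<lambda>q. pdir (dirv j) f q * g q + f q * pdir (dirv j) g q) p"
      by (rule pdir_local[OF U that(1)]) (use gf gg that U in \<open>auto simp: pdir_mult gexp_ld\<close>)
    also have "\<dots> = (pdir (dirv i) (pdir (dirv j) f) p * g p + pdir (dirv j) f p * pdir (dirv i) g p) +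
     (pdir (dirv i) f p * pdir (dirv j) g p + f p * pdir (dirv i) (pdir (dirv j) g) p)"
      using ld1 by (simp add: pdir_add pdir_mult ld_mult)
    finally show ?thesis .
  qed
  show ?case using gmult.IH by (auto simp: e algebra_simps)
next
  case (ginv f)
  note gf = ginv(1) and nz = ginv(2)
  have e: "pdir (dirv i) (pdir (dirv j) (\<lambda>q. inverse (f q))) p =
     - (pdir (dirv i) (pdir (dirv j) f) p * inverse (f p) ^ 2) +
     2 * pdir (dirv j) f p * pdir (dirv i) f p * inverse (f p) ^ 3" if "p \<in> U" "i < 4" "j < 4" for p i j
  proof -
    have ld1: "ld (pdir (dirv j) f) p (dirv i)" "ld f p (dirv i)"
      using gf that U by (auto intro: gexp_ld gexp_pdir)
    have "pdir (dirv i) (pdir (dirv j) (\<lambda>q. inverse (f q))) p =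
        pdir (dirv i) (\<lambda>q. - (pdir (dirv j) f q * (inverse (f q) * inverse (f q)))) p"
      by (rule pdir_local[OF U that(1)]) (use gf nz that U in \<open>auto simp: pdir_inv gexp_ld power2_eq_square\<close>)
    also have "\<dots> = - (pdir (dirv i) (pdir (dirv j) f) p * (inverse (f p) * inverse (f p)) +
        pdir (dirv j) f p * ((- (pdir (dirv i) f p * inverse (f p) ^ 2)) * inverse (f p) + inverse (f p) * (- (pdir (dirv i) f p * inverse (f p) ^ 2))))"
      using ld1 nz that by (simp add: pdir_uminus ld_uminus pdir_mult ld_mult pdir_inv ld_inv)
    finally show ?thesis using nz that by (simp add: field_simps power2_eq_square power3_eq_cube)
  qed
  show ?case using ginv.IH by (auto simp: e algebra_simps)
next
  case (gcnj f)
  note gf = gcnj(1)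
  have e: "pdir (dirv i) (pdir (dirv j) (\<lambda>q. cnj (f q))) p = cnj (pdir (dirv i) (pdir (dirv j) f) p)"
    if "p \<in> U" "i < 4" "j < 4" for p i j
  proof -
    have "pdir (dirv i) (pdir (dirv j) (\<lambda>q. cnj (f q))) p = pdir (dirv i) (\<lambda>q. cnj (pdir (dirv j) f q)) p"
      by (rule pdir_local[OF U that(1)]) (use gf that U in \<open>auto simp: pdir_cnj gexp_ld\<close>)
    also have "\<dots> = cnj (pdir (dirv i) (pdir (dirv j) f) p)"
      by (rule pdir_cnj) (use gf that U in \<open>auto intro: gexp_ld gexp_pdir\<close>)
    finally show ?thesis .
  qed
  show ?case using gcnj.IH by (auto simp: e)
next
  case (gcong f g)
  have e: "pdir (dirv i) (pdir (dirv j) g) p = pdir (dirv i) (pdir (dirv j) f) p"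
    if "p \<in> U" "i < 4" "j < 4" for p i j
    by (rule pdir_local[OF U that(1)]) (use gcong U in \<open>auto intro: pdir_local\<close>)
  show ?case using gcong.IH by (auto simp: e)
qed

lemma gexp_good:
  assumes "open U" "gexp U g"
  shows "good U g"
  using assms(2)
proof (coinduction arbitrary: g)
  case (good g)
  show ?case
    apply (rule exI[of _ g])
    apply (intro conjI allI impI refl)
    subgoal using gexp_ld[OF assms(1) good] by (simp add: ld_def)
    subgoal using gexp_comm[OF assms(1) good] by blast
    subgoal for i using gexp_pdir[OF assms(1) good] by blast
    done
qed


definition W :: "complex \<Rightarrow> nat \<Rightarrow> nat \<Rightarrow> (pt \<Rightarrow> complex) \<Rightarrow> pt \<Rightarrow> complex" where
  "W \<sigma> a b g p = (pdir (dirv a) g p + \<sigma> * pdir (dirv b) g p) / 2"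

lemma W_fun: "W \<sigma> a b g = (\<lambda>q. (pdir (dirv a) g q + \<sigma> * pdir (dirv b) g q) * inverse 2)"
  by (rule ext) (simp only: W_def divide_inverse)

lemma Dz1_W: "Dz1 = W (-\<i>) 0 1" by (intro ext) (simp add: Dz1_def W_def dirv_def)
lemma Dzb1_W: "Dzb1 = W \<i> 0 1" by (intro ext) (simp add: Dzb1_def W_def dirv_def)
lemma Dz2_W: "Dz2 = W (-\<i>) 2 3" by (intro ext) (simp add: Dz2_def W_def dirv_def)
lemma Dzb2_W: "Dzb2 = W \<i> 2 3" by (intro ext) (simp add: Dzb2_def W_def dirv_def)

context
  fixes U :: "pt set" assumes U: "open U"
begin

lemma W_local: "p \<in> U \<Longrightarrow> \<forall>q\<in>U. f q = g q \<Longrightarrow> W \<sigma> a b f p = W \<sigma> a b g p"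
proof -
  assume a: "p \<in> U" "\<forall>q\<in>U. f q = g q"
  have "pdir v f p = pdir v g p" for v by (rule pdir_local[OF U a])
  then show ?thesis unfolding W_def by simp
qed

lemma W_add: "p \<in> U \<Longrightarrow> a < 4 \<Longrightarrow> b < 4 \<Longrightarrow> gexp U f \<Longrightarrow> gexp U g \<Longrightarrow>
  W \<sigma> a b (\<lambda>q. f q + g q) p = W \<sigma> a b f p + W \<sigma> a b g p"
  unfolding W_def by (simp add: pdir_add gexp_ld[OF U] algebra_simps add_divide_distrib)

lemma W_mult: "p \<in> U \<Longrightarrow> a < 4 \<Longrightarrow> b < 4 \<Longrightarrow> gexp U f \<Longrightarrow> gexp U g \<Longrightarrow>
  W \<sigma> a b (\<lambda>q. f q * g q) p = W \<sigma> a b f p * g p + f p * W \<sigma> a b g p"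
  unfolding W_def by (simp add: pdir_mult gexp_ld[OF U] algebra_simps add_divide_distrib)

lemma W_const: "W \<sigma> a b (\<lambda>q. c) p = 0"
  unfolding W_def by (simp add: pdir_const)

lemma W_inv: "p \<in> U \<Longrightarrow> a < 4 \<Longrightarrow> b < 4 \<Longrightarrow> gexp U f \<Longrightarrow> \<forall>q\<in>U. f q \<noteq> 0 \<Longrightarrow>
  W \<sigma> a b (\<lambda>q. inverse (f q)) p = - (W \<sigma> a b f p * inverse (f p) ^ 2)"
  unfolding W_def by (simp add: pdir_inv gexp_ld[OF U] algebra_simps add_divide_distrib diff_divide_distrib)

lemma W_cnj: "p \<in> U \<Longrightarrow> a < 4 \<Longrightarrow> b < 4 \<Longrightarrow> gexp U f \<Longrightarrow>
  W \<sigma> a b (\<lambda>q. cnj (f q)) p = cnj (W (cnj \<sigma>) a b f p)"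
  unfolding W_def by (simp add: pdir_cnj gexp_ld[OF U])

lemma gexp_W: "a < 4 \<Longrightarrow> b < 4 \<Longrightarrow> gexp U f \<Longrightarrow> gexp U (W \<sigma> a b f)"
proof -
  assume ab: "a < 4" "b < 4" and f: "gexp U f"
  have "gexp U (\<lambda>q. (pdir (dirv a) f q + \<sigma> * pdir (dirv b) f q) * inverse 2)"
    by (rule gmult[OF gadd[OF gexp_pdir[OF U f ab(1)] gmult[OF gconst gexp_pdir[OF U f ab(2)]]] gconst])
  then show ?thesis by (rule gcong) (unfold W_def divide_inverse, rule ballI, rule refl)
qed

lemma W_comm: "p \<in> U \<Longrightarrow> a < 4 \<Longrightarrow> b < 4 \<Longrightarrow> c < 4 \<Longrightarrow> d < 4 \<Longrightarrow> gexp U f \<Longrightarrow>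
  W \<sigma> a b (W \<tau> c d f) p = W \<tau> c d (W \<sigma> a b f) p"
proof -
  assume p: "p \<in> U" and abcd: "a < 4" "b < 4" "c < 4" "d < 4" and f: "gexp U f"
  have g: "gexp U (pdir (dirv i) f)" if "i < 4" for i using gexp_pdir[OF U f that] .
  have ldd: "ld (pdir (dirv i) f) p (dirv j)" if "i < 4" "j < 4" for i j
    using gexp_ld[OF U g[OF that(1)] p that(2)] .
  have lin: "pdir (dirv j) (W \<rho> i k f) p = (pdir (dirv j) (pdir (dirv i) f) p + \<rho> * pdir (dirv j) (pdir (dirv k) f) p) / 2"
    if "i < 4" "k < 4" "j < 4" for \<rho> i k j
  proof -
    have "pdir (dirv j) (W \<rho> i k f) p = pdir (dirv j) (\<lambda>q. (pdir (dirv i) f q + \<rho> * pdir (dirv k) f q) * inverse 2) p"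
      by (simp only: W_fun)
    also have "\<dots> = (pdir (dirv j) (pdir (dirv i) f) p + \<rho> * pdir (dirv j) (pdir (dirv k) f) p) * inverse 2"
    proof -
      have lA: "ld (pdir (dirv i) f) p (dirv j)" and lB: "ld (pdir (dirv k) f) p (dirv j)" using ldd that by auto
      have lC: "ld (\<lambda>q. \<rho> * pdir (dirv k) f q) p (dirv j)" by (rule ld_mult[OF ld_const lB])
      have lS: "ld (\<lambda>q. pdir (dirv i) f q + \<rho> * pdir (dirv k) f q) p (dirv j)" by (rule ld_add[OF lA lC])
      have e1: "pdir (dirv j) (\<lambda>q. (pdir (dirv i) f q + \<rho> * pdir (dirv k) f q) * inverse 2) p =
          pdir (dirv j) (\<lambda>q. pdir (dirv i) f q + \<rho> * pdir (dirv k) f q) p * inverse 2 + 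
          (pdir (dirv i) f p + \<rho> * pdir (dirv k) f p) * pdir (dirv j) (\<lambda>q. inverse 2) p"
        by (rule pdir_mult[OF lS ld_const])
      have e2: "pdir (dirv j) (\<lambda>q. pdir (dirv i) f q + \<rho> * pdir (dirv k) f q) p =
          pdir (dirv j) (pdir (dirv i) f) p + pdir (dirv j) (\<lambda>q. \<rho> * pdir (dirv k) f q) p"
        by (rule pdir_add[OF lA lC])
      have e3: "pdir (dirv j) (\<lambda>q. \<rho> * pdir (dirv k) f q) p = pdir (dirv j) (\<lambda>q. \<rho>) p * pdir (dirv k) f p + \<rho> * pdir (dirv j) (pdir (dirv k) f) p"
        by (rule pdir_mult[OF ld_const lB])
      show ?thesis unfolding e1 e2 e3 pdir_const by simp
    qed
    finally show ?thesis by (simp only: divide_inverse)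
  qed
  have cm: "pdir (dirv i) (pdir (dirv j) f) p = pdir (dirv j) (pdir (dirv i) f) p" if "i < 4" "j < 4" for i j
    using gexp_comm[OF U f] p that by blast
  have L: "W \<sigma> a b (W \<tau> c d f) p = (pdir (dirv a) (W \<tau> c d f) p + \<sigma> * pdir (dirv b) (W \<tau> c d f) p) / 2"
    by (rule W_def)
  have R: "W \<tau> c d (W \<sigma> a b f) p = (pdir (dirv c) (W \<sigma> a b f) p + \<tau> * pdir (dirv d) (W \<sigma> a b f) p) / 2"
    by (rule W_def)
  show ?thesis unfolding L R lin[OF abcd(3,4,1)] lin[OF abcd(3,4,2)] lin[OF abcd(1,2,3)] lin[OF abcd(1,2,4)]
    cm[OF abcd(1,3)] cm[OF abcd(1,4)] cm[OF abcd(2,3)] cm[OF abcd(2,4)]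
    by (simp add: field_simps)
qed


lemma gexp_diff: assumes "gexp U f" "gexp U g" shows "gexp U (\<lambda>q. f q - g q)"
proof -
  have "gexp U (\<lambda>q. f q + (-1) * g q)" by (rule gadd[OF assms(1) gmult[OF gconst assms(2)]])
  then show ?thesis by (rule gcong) simp
qed
lemma gexp_uminus: assumes "gexp U f" shows "gexp U (\<lambda>q. - f q)"
proof -
  have "gexp U (\<lambda>q. (-1) * f q)" by (rule gmult[OF gconst assms(1)])
  then show ?thesis by (rule gcong) simp
qed
lemma gexp_cmult: "gexp U f \<Longrightarrow> gexp U (\<lambda>q. c * f q)"
  by (rule gmult[OF gconst])
lemma gexp_div: assumes "gexp U f" "gexp U g" "\<forall>q\<in>U. g q \<noteq> 0" shows "gexp U (\<lambda>q. f q / g q)"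
proof -
  have "gexp U (\<lambda>q. f q * inverse (g q))" by (rule gmult[OF assms(1) ginv[OF assms(2,3)]])
  then show ?thesis by (rule gcong) (simp add: divide_inverse)
qed

lemma W_uminus: "p \<in> U \<Longrightarrow> a < 4 \<Longrightarrow> b < 4 \<Longrightarrow> gexp U f \<Longrightarrow>
  W \<sigma> a b (\<lambda>q. - f q) p = - W \<sigma> a b f p"
proof -
  assume a: "p \<in> U" "a < 4" "b < 4" "gexp U f"
  have "W \<sigma> a b (\<lambda>q. - f q) p = W \<sigma> a b (\<lambda>q. (-1) * f q) p" by (rule W_local) (use a in auto)
  also have "\<dots> = W \<sigma> a b (\<lambda>q. -1) p * f p + (-1) * W \<sigma> a b f p" by (rule W_mult) (use a in \<open>auto intro: gconst\<close>)
  finally show ?thesis by (simp add: W_const)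
qed

lemma W_cmult: "p \<in> U \<Longrightarrow> a < 4 \<Longrightarrow> b < 4 \<Longrightarrow> gexp U f \<Longrightarrow>
  W \<sigma> a b (\<lambda>q. c * f q) p = c * W \<sigma> a b f p"
proof -
  assume a: "p \<in> U" "a < 4" "b < 4" "gexp U f"
  have "W \<sigma> a b (\<lambda>q. c * f q) p = W \<sigma> a b (\<lambda>q. c) p * f p + c * W \<sigma> a b f p" by (rule W_mult) (use a in \<open>auto intro: gconst\<close>)
  then show ?thesis by (simp add: W_const)
qed

lemma W_diff: "p \<in> U \<Longrightarrow> a < 4 \<Longrightarrow> b < 4 \<Longrightarrow> gexp U f \<Longrightarrow> gexp U g \<Longrightarrow>
  W \<sigma> a b (\<lambda>q. f q - g q) p = W \<sigma> a b f p - W \<sigma> a b g p"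
proof -
  assume a: "p \<in> U" "a < 4" "b < 4" "gexp U f" "gexp U g"
  have "W \<sigma> a b (\<lambda>q. f q - g q) p = W \<sigma> a b (\<lambda>q. f q + (- g q)) p" by (rule W_local) (use a in auto)
  also have "\<dots> = W \<sigma> a b f p + W \<sigma> a b (\<lambda>q. - g q) p" by (rule W_add) (use a in \<open>auto intro: gexp_uminus\<close>)
  finally show ?thesis using W_uminus a by simp
qed

lemma W_div: "p \<in> U \<Longrightarrow> a < 4 \<Longrightarrow> b < 4 \<Longrightarrow> gexp U f \<Longrightarrow> gexp U g \<Longrightarrow> \<forall>q\<in>U. g q \<noteq> 0 \<Longrightarrow>
  W \<sigma> a b (\<lambda>q. f q / g q) p = (W \<sigma> a b f p * g p - f p * W \<sigma> a b g p) / (g p)^2"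
proof -
  assume a: "p \<in> U" "a < 4" "b < 4" "gexp U f" "gexp U g" "\<forall>q\<in>U. g q \<noteq> 0"
  have "W \<sigma> a b (\<lambda>q. f q / g q) p = W \<sigma> a b (\<lambda>q. f q * inverse (g q)) p" by (rule W_local) (use a in \<open>auto simp: divide_inverse\<close>)
  also have "\<dots> = W \<sigma> a b f p * inverse (g p) + f p * W \<sigma> a b (\<lambda>q. inverse (g q)) p"
    by (rule W_mult) (use a in \<open>auto intro: ginv\<close>)
  also have "\<dots> = W \<sigma> a b f p * inverse (g p) + f p * (- (W \<sigma> a b g p * inverse (g p) ^ 2))"
    using W_inv a by simp
  finally show ?thesis using a by (simp add: field_simps power2_eq_square)
qed

lemma Dz1_local: "p \<in> U \<Longrightarrow> \<forall>q\<in>U. f q = g q \<Longrightarrow> Dz1 f p = Dz1 g p"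
  unfolding Dz1_W by (rule W_local)
lemma Dz1_add: "p \<in> U \<Longrightarrow> gexp U f \<Longrightarrow> gexp U g \<Longrightarrow> Dz1 (\<lambda>q. f q + g q) p = Dz1 f p + Dz1 g p"
  unfolding Dz1_W by (rule W_add) auto
lemma Dz1_diff: "p \<in> U \<Longrightarrow> gexp U f \<Longrightarrow> gexp U g \<Longrightarrow> Dz1 (\<lambda>q. f q - g q) p = Dz1 f p - Dz1 g p"
  unfolding Dz1_W by (rule W_diff) auto
lemma Dz1_mult: "p \<in> U \<Longrightarrow> gexp U f \<Longrightarrow> gexp U g \<Longrightarrow> Dz1 (\<lambda>q. f q * g q) p = Dz1 f p * g p + f p * Dz1 g p"
  unfolding Dz1_W by (rule W_mult) auto
lemma Dz1_uminus: "p \<in> U \<Longrightarrow> gexp U f \<Longrightarrow> Dz1 (\<lambda>q. - f q) p = - Dz1 f p"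
  unfolding Dz1_W by (rule W_uminus) auto
lemma Dz1_cmult: "p \<in> U \<Longrightarrow> gexp U f \<Longrightarrow> Dz1 (\<lambda>q. c * f q) p = c * Dz1 f p"
  unfolding Dz1_W by (rule W_cmult) auto
lemma Dz1_const: "Dz1 (\<lambda>q. c) p = 0"
  unfolding Dz1_W by (rule W_const)
lemma Dz1_div: "p \<in> U \<Longrightarrow> gexp U f \<Longrightarrow> gexp U g \<Longrightarrow> \<forall>q\<in>U. g q \<noteq> 0 \<Longrightarrow>
   Dz1 (\<lambda>q. f q / g q) p = (Dz1 f p * g p - f p * Dz1 g p) / (g p)^2"
  unfolding Dz1_W by (rule W_div) auto
lemma gexp_Dz1: "gexp U f \<Longrightarrow> gexp U (Dz1 f)"
  unfolding Dz1_W by (rule gexp_W) auto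

lemma Dzb1_local: "p \<in> U \<Longrightarrow> \<forall>q\<in>U. f q = g q \<Longrightarrow> Dzb1 f p = Dzb1 g p"
  unfolding Dzb1_W by (rule W_local)
lemma Dzb1_add: "p \<in> U \<Longrightarrow> gexp U f \<Longrightarrow> gexp U g \<Longrightarrow> Dzb1 (\<lambda>q. f q + g q) p = Dzb1 f p + Dzb1 g p"
  unfolding Dzb1_W by (rule W_add) auto
lemma Dzb1_diff: "p \<in> U \<Longrightarrow> gexp U f \<Longrightarrow> gexp U g \<Longrightarrow> Dzb1 (\<lambda>q. f q - g q) p = Dzb1 f p - Dzb1 g p"
  unfolding Dzb1_W by (rule W_diff) auto
lemma Dzb1_mult: "p \<in> U \<Longrightarrow> gexp U f \<Longrightarrow> gexp U g \<Longrightarrow> Dzb1 (\<lambda>q. f q * g q) p = Dzb1 f p * g p + f p * Dzb1 g p"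
  unfolding Dzb1_W by (rule W_mult) auto
lemma Dzb1_uminus: "p \<in> U \<Longrightarrow> gexp U f \<Longrightarrow> Dzb1 (\<lambda>q. - f q) p = - Dzb1 f p"
  unfolding Dzb1_W by (rule W_uminus) auto
lemma Dzb1_cmult: "p \<in> U \<Longrightarrow> gexp U f \<Longrightarrow> Dzb1 (\<lambda>q. c * f q) p = c * Dzb1 f p"
  unfolding Dzb1_W by (rule W_cmult) auto
lemma Dzb1_const: "Dzb1 (\<lambda>q. c) p = 0"
  unfolding Dzb1_W by (rule W_const)
lemma Dzb1_div: "p \<in> U \<Longrightarrow> gexp U f \<Longrightarrow> gexp U g \<Longrightarrow> \<forall>q\<in>U. g q \<noteq> 0 \<Longrightarrow>
   Dzb1 (\<lambda>q. f q / g q) p = (Dzb1 f p * g p - f p * Dzb1 g p) / (g p)^2"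
  unfolding Dzb1_W by (rule W_div) auto
lemma gexp_Dzb1: "gexp U f \<Longrightarrow> gexp U (Dzb1 f)"
  unfolding Dzb1_W by (rule gexp_W) auto

lemma Dz2_local: "p \<in> U \<Longrightarrow> \<forall>q\<in>U. f q = g q \<Longrightarrow> Dz2 f p = Dz2 g p"
  unfolding Dz2_W by (rule W_local)
lemma Dz2_add: "p \<in> U \<Longrightarrow> gexp U f \<Longrightarrow> gexp U g \<Longrightarrow> Dz2 (\<lambda>q. f q + g q) p = Dz2 f p + Dz2 g p"
  unfolding Dz2_W by (rule W_add) auto
lemma Dz2_diff: "p \<in> U \<Longrightarrow> gexp U f \<Longrightarrow> gexp U g \<Longrightarrow> Dz2 (\<lambda>q. f q - g q) p = Dz2 f p - Dz2 g p"
  unfolding Dz2_W by (rule W_diff) auto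
lemma Dz2_mult: "p \<in> U \<Longrightarrow> gexp U f \<Longrightarrow> gexp U g \<Longrightarrow> Dz2 (\<lambda>q. f q * g q) p = Dz2 f p * g p + f p * Dz2 g p"
  unfolding Dz2_W by (rule W_mult) auto
lemma Dz2_uminus: "p \<in> U \<Longrightarrow> gexp U f \<Longrightarrow> Dz2 (\<lambda>q. - f q) p = - Dz2 f p"
  unfolding Dz2_W by (rule W_uminus) auto
lemma Dz2_cmult: "p \<in> U \<Longrightarrow> gexp U f \<Longrightarrow> Dz2 (\<lambda>q. c * f q) p = c * Dz2 f p"
  unfolding Dz2_W by (rule W_cmult) auto
lemma Dz2_const: "Dz2 (\<lambda>q. c) p = 0"
  unfolding Dz2_W by (rule W_const)
lemma Dz2_div: "p \<in> U \<Longrightarrow> gexp U f \<Longrightarrow> gexp U g \<Longrightarrow> \<forall>q\<in>U. g q \<noteq> 0 \<Longrightarrow>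
   Dz2 (\<lambda>q. f q / g q) p = (Dz2 f p * g p - f p * Dz2 g p) / (g p)^2"
  unfolding Dz2_W by (rule W_div) auto
lemma gexp_Dz2: "gexp U f \<Longrightarrow> gexp U (Dz2 f)"
  unfolding Dz2_W by (rule gexp_W) auto

lemma Dz1_cnj: "p \<in> U \<Longrightarrow> gexp U f \<Longrightarrow> Dz1 (\<lambda>q. cnj (f q)) p = cnj (Dzb1 f p)"
  unfolding Dz1_W Dzb1_W by (subst W_cnj) auto
lemma Dzb1_cnj: "p \<in> U \<Longrightarrow> gexp U f \<Longrightarrow> Dzb1 (\<lambda>q. cnj (f q)) p = cnj (Dz1 f p)"
  unfolding Dz1_W Dzb1_W by (subst W_cnj) auto
lemma Dz1_Dzb1: "p \<in> U \<Longrightarrow> gexp U f \<Longrightarrow> Dz1 (Dzb1 f) p = Dzb1 (Dz1 f) p"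
  unfolding Dz1_W Dzb1_W by (rule W_comm) auto
lemma Dz1_Dz2: "p \<in> U \<Longrightarrow> gexp U f \<Longrightarrow> Dz1 (Dz2 f) p = Dz2 (Dz1 f) p"
  unfolding Dz1_W Dz2_W by (rule W_comm) auto
lemma Dzb1_Dz2: "p \<in> U \<Longrightarrow> gexp U f \<Longrightarrow> Dzb1 (Dz2 f) p = Dz2 (Dzb1 f) p"
  unfolding Dzb1_W Dz2_W by (rule W_comm) auto

end


lemma re_half: "complex_of_real (Re z) = (z + cnj z) / 2"
  by (simp add: complex_add_cnj)

lemma final_alg:
  fixes D ED LD LED P EP LA KA KEA I B KV0 KPb KEPb EI :: complex
  assumes D: "D \<noteq> 0" and EP: "cnj EP = EP"
    and LA: "LA = (LED * D - ED * LD) / D^2"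
    and I: "I = -1/3 * KA / D + 2/3 * cnj (ED / D) + 2/3 * LD / D"
    and B: "B = 1/3 * (ED / D - cnj P)"
    and KPb: "KPb = -(LD + D * P)"
    and KEPb: "KEPb = -(LED + ED * P + 2 * D * EP)"
    and KV0: "KV0 = -((KEA - KEPb)/3) + ((2*KA + KPb) * B + (2*(ED/D) + cnj P) * ((KA - KPb)/3)) / 3"
    and EI: "EI = -1/3 * ((KEA + D * LA) * D - KA * ED) / D^2 + 2/3 * cnj LA + 2/3 * LA"
  shows "1/2 * EI + 1/2 * B * I + cnj B * cnj I - 1/2 * KV0 / D =
     B * I + cnj B * cnj I - B * cnj B + 2/3 * complex_of_real (Re LA) + 1/3 * complex_of_real (Re EP)"
proof -
  have EPr: "complex_of_real (Re EP) = EP" using EP by (simp add: re_half)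
  have LED: "LED = (LA * D^2 + ED * LD) / D" using LA D by (simp add: field_simps power2_eq_square)
  have cD: "cnj D \<noteq> 0" using D by simp
  show ?thesis
    unfolding EPr re_half EI KV0 KEPb KPb I B LED
    using D cD EP by (simp add: field_simps power2_eq_square)
qed


theorem proposition8p1:
  fixes U :: "(complex \<times> complex) set" and F :: "complex \<times> complex \<Rightarrow> real"
  assumes "open U"
    and "real_analytic_on U F"
    and "\<forall>p\<in>U. Dz1 (Dzb1 (cF F)) p \<noteq> 0"
    and "\<forall>p\<in>U. Dz1 (Dzb1 (cF F)) p * Dz2 (Dzb2 (cF F)) p
                 - Dz2 (Dzb1 (cF F)) p * Dz1 (Dzb2 (cF F)) p = 0"
    and "\<forall>p\<in>U. Dzb1 (slant F) p \<noteq> 0"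
  shows "\<forall>p\<in>U. Q0 F p =
      Bfun F p * I0 F p + cnj (Bfun F p) * cnj (I0 F p) - Bfun F p * cnj (Bfun F p)
      + 2/3 * complex_of_real (Re (Dz1 (\<lambda>q. Dzb1 (Dzb1 (slant F)) q / Dzb1 (slant F) q) p))
      + 1/3 * complex_of_real (Re (Dzb1 (Pfun F) p))"
proof
  fix p assume pU: "p \<in> U"
  note U = assms(1)
  define Fc where "Fc = cF F"
  define f where "f = Dz1 (Dzb1 Fc)"
  define k where "k = slant F"
  define D where "D = Dzb1 k"
  define A where "A = (\<lambda>q. Dzb1 D q / D q)"
  define P where "P = Pfun F"
  define Pb where "Pb = (\<lambda>q. cnj (P q))"
  define Db where "Db = (\<lambda>q. cnj (D q))"
  define B where "B = Bfun F"
  define Y where "Y = (\<lambda>q. Dz1 Db q / Db q)"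
  have fnz: "\<forall>q\<in>U. f q \<noteq> 0" using assms(3) by (simp add: f_def Fc_def)
  have Dnz: "\<forall>q\<in>U. D q \<noteq> 0" using assms(5) by (simp add: D_def k_def)
  have Dbnz: "\<forall>q\<in>U. Db q \<noteq> 0" using Dnz by (simp add: Db_def)
  have gFc: "gexp U Fc" unfolding Fc_def by (rule gbase[OF analytic_good[OF assms(2)]])
  have gEFc: "gexp U (Dzb1 Fc)" by (rule gexp_Dzb1[OF U gFc])
  have gf: "gexp U f" unfolding f_def by (rule gexp_Dz1[OF U gEFc])
  have gMEFc: "gexp U (Dz2 (Dzb1 Fc))" by (rule gexp_Dz2[OF U gEFc])
  have k_eq: "k = (\<lambda>q. - Dz2 (Dzb1 Fc) q / f q)"
    by (rule ext) (simp add: k_def slant_def f_def Fc_def)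
  have gk: "gexp U k" unfolding k_eq by (rule gexp_div[OF U gexp_uminus[OF U gMEFc] gf fnz])
  have gD: "gexp U D" unfolding D_def by (rule gexp_Dzb1[OF U gk])
  have gED: "gexp U (Dzb1 D)" by (rule gexp_Dzb1[OF U gD])
  have gA: "gexp U A" unfolding A_def by (rule gexp_div[OF U gED gD Dnz])
  have P_eq: "P = (\<lambda>q. Dz1 f q / f q)" by (rule ext) (simp add: P_def Pfun_def f_def Fc_def)
  have gP: "gexp U P" unfolding P_eq by (rule gexp_div[OF U gexp_Dz1[OF U gf] gf fnz])
  have gPb: "gexp U Pb" unfolding Pb_def by (rule gcnj[OF gP])
  have gDb: "gexp U Db" unfolding Db_def by (rule gcnj[OF gD])
  have B_eq: "B = (\<lambda>q. 1/3 * (A q - Pb q))"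
    by (rule ext) (simp add: B_def Bfun_def A_def Pb_def P_def D_def k_def Let_def)
  have gB: "gexp U B" unfolding B_eq by (rule gexp_cmult[OF U gexp_diff[OF U gA gPb]])
  have gY: "gexp U Y" unfolding Y_def by (rule gexp_div[OF U gexp_Dz1[OF U gDb] gDb Dbnz])
  have Kop_eq: "Kop F g = (\<lambda>x. k x * Dz1 g x + Dz2 g x)" for g
    by (rule ext) (simp add: Kop_def k_def)
  have gKop: "gexp U (Kop F g)" if "gexp U g" for g
    unfolding Kop_eq by (rule gadd[OF gmult[OF gk gexp_Dz1[OF U that]] gexp_Dz2[OF U that]])

  have R0: "\<forall>q\<in>U. cnj (f q) = f q"
  proof
    fix q assume q: "q \<in> U"
    have c1: "(\<lambda>x. cnj (Fc x)) = Fc" by (rule ext) (simp add: Fc_def)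
    have "cnj (f q) = cnj (Dz1 (Dzb1 Fc) q)" by (simp add: f_def)
    also have "\<dots> = Dzb1 (\<lambda>x. cnj (Dzb1 Fc x)) q" by (rule Dzb1_cnj[OF U q gEFc, symmetric])
    also have "\<dots> = Dzb1 (Dz1 (\<lambda>x. cnj (Fc x))) q"
      by (rule Dzb1_local[OF U q]) (use Dz1_cnj[OF U _ gFc] in auto)
    also have "\<dots> = Dzb1 (Dz1 Fc) q" by (simp only: c1)
    also have "\<dots> = f q" using Dz1_Dzb1[OF U q gFc] by (simp add: f_def)
    finally show "cnj (f q) = f q" .
  qed
  have R1: "\<forall>q\<in>U. Pb q = Dzb1 f q / f q"
  proof
    fix q assume q: "q \<in> U"
    have "Pb q = cnj (Dz1 f q) / cnj (f q)" by (simp add: Pb_def P_eq)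
    also have "cnj (Dz1 f q) = Dzb1 (\<lambda>x. cnj (f x)) q" by (rule Dzb1_cnj[OF U q gf, symmetric])
    also have "\<dots> = Dzb1 f q" by (rule Dzb1_local[OF U q]) (use R0 in auto)
    finally show "Pb q = Dzb1 f q / f q" using R0 q by simp
  qed
  have R2: "\<forall>q\<in>U. k q * Dz1 f q + Dz2 f q = - (f q * Dz1 k q)"
  proof
    fix q assume q: "q \<in> U"
    have kf: "\<forall>x\<in>U. k x * f x = - Dz2 (Dzb1 Fc) x" using fnz by (simp add: k_eq)
    have "Dz1 (\<lambda>x. k x * f x) q = Dz1 (\<lambda>x. - Dz2 (Dzb1 Fc) x) q" by (rule Dz1_local[OF U q kf])
    then have "Dz1 k q * f q + k q * Dz1 f q = - Dz1 (Dz2 (Dzb1 Fc)) q"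
      by (simp add: Dz1_mult[OF U q gk gf] Dz1_uminus[OF U q gMEFc])
    also have "Dz1 (Dz2 (Dzb1 Fc)) q = Dz2 f q" by (simp add: Dz1_Dz2[OF U q gEFc] f_def)
    finally show "k q * Dz1 f q + Dz2 f q = - (f q * Dz1 k q)" by (simp add: eq_neg_iff_add_eq_0 algebra_simps)
  qed
  have R3: "Dzb1 (Kop F g) q = Kop F (Dzb1 g) q + D q * Dz1 g q" if g: "gexp U g" and q: "q \<in> U" for g q
  proof -
    have "Dzb1 (Kop F g) q = Dzb1 (\<lambda>x. k x * Dz1 g x + Dz2 g x) q" by (simp only: Kop_eq)
    also have "\<dots> = (Dzb1 k q * Dz1 g q + k q * Dzb1 (Dz1 g) q) + Dzb1 (Dz2 g) q"
      by (simp add: Dzb1_add[OF U q gmult[OF gk gexp_Dz1[OF U g]] gexp_Dz2[OF U g]]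
          Dzb1_mult[OF U q gk gexp_Dz1[OF U g]])
    also have "\<dots> = Kop F (Dzb1 g) q + D q * Dz1 g q"
      by (simp add: Kop_eq D_def Dz1_Dzb1[OF U q g] Dzb1_Dz2[OF U q g])
    finally show ?thesis .
  qed
  have e1: "Dz1 Pb q = (Dz1 (Dzb1 f) q * f q - Dzb1 f q * Dz1 f q) / (f q)^2" if q: "q \<in> U" for q
  proof -
    have "Dz1 Pb q = Dz1 (\<lambda>x. Dzb1 f x / f x) q" by (rule Dz1_local[OF U q R1])
    also have "\<dots> = (Dz1 (Dzb1 f) q * f q - Dzb1 f q * Dz1 f q) / (f q)^2" by (rule Dz1_div[OF U q gexp_Dzb1[OF U gf] gf fnz])
    finally show ?thesis .
  qed
  have e2: "Dz2 Pb q = (Dz2 (Dzb1 f) q * f q - Dzb1 f q * Dz2 f q) / (f q)^2" if q: "q \<in> U" for q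
  proof -
    have "Dz2 Pb q = Dz2 (\<lambda>x. Dzb1 f x / f x) q" by (rule Dz2_local[OF U q R1])
    also have "\<dots> = (Dz2 (Dzb1 f) q * f q - Dzb1 f q * Dz2 f q) / (f q)^2" by (rule Dz2_div[OF U q gexp_Dzb1[OF U gf] gf fnz])
    finally show ?thesis .
  qed
  have R4: "\<forall>q\<in>U. Kop F Pb q = - (Dz1 D q + D q * P q)"
  proof
    fix q assume q: "q \<in> U"
    have "Dzb1 (\<lambda>x. k x * Dz1 f x + Dz2 f x) q = Dzb1 (\<lambda>x. - (f x * Dz1 k x)) q"
      by (rule Dzb1_local[OF U q R2])
    then have e3: "D q * Dz1 f q + k q * Dz1 (Dzb1 f) q + Dz2 (Dzb1 f) q = - (Dzb1 f q * Dz1 k q + f q * Dz1 D q)"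
      by (simp add: Dzb1_add[OF U q gmult[OF gk gexp_Dz1[OF U gf]] gexp_Dz2[OF U gf]]
          Dzb1_mult[OF U q gk gexp_Dz1[OF U gf]] Dzb1_uminus[OF U q gmult[OF gf gexp_Dz1[OF U gk]]]
          Dzb1_mult[OF U q gf gexp_Dz1[OF U gk]] Dz1_Dzb1[OF U q gf, symmetric] Dzb1_Dz2[OF U q gf]
          Dz1_Dzb1[OF U q gk, symmetric] D_def)
    have r2: "k q * Dz1 f q + Dz2 f q = - (f q * Dz1 k q)" using R2 q by blast
    have fq: "f q \<noteq> 0" using fnz q by blast
    have a2: "Dz2 (Dzb1 f) q = - (Dzb1 f q * Dz1 k q + f q * Dz1 D q) - D q * Dz1 f q - k q * Dz1 (Dzb1 f) q"
      using e3 by (simp add: algebra_simps)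
    have mf: "Dz2 f q = - (f q * Dz1 k q) - k q * Dz1 f q" using r2 by (simp add: algebra_simps)
    show "Kop F Pb q = - (Dz1 D q + D q * P q)"
      unfolding Kop_eq e1[OF q] e2[OF q] a2 mf P_eq using fq by (simp add: field_simps power2_eq_square)
  qed
  have R5: "\<forall>q\<in>U. Dzb1 P q = Dz1 Pb q"
  proof
    fix q assume q: "q \<in> U"
    have "Dzb1 P q = (Dzb1 (Dz1 f) q * f q - Dz1 f q * Dzb1 f q) / (f q)^2"
      unfolding P_eq by (rule Dzb1_div[OF U q gexp_Dz1[OF U gf] gf fnz])
    then show "Dzb1 P q = Dz1 Pb q" by (simp add: e1[OF q] Dz1_Dzb1[OF U q gf] mult.commute)
  qed
  have EPr: "cnj (Dzb1 P p) = Dzb1 P p"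
  proof -
    have "Dz1 Pb p = cnj (Dzb1 P p)" unfolding Pb_def by (rule Dz1_cnj[OF U pU gP])
    then show ?thesis using R5 pU by simp
  qed
  have R6: "Dzb1 (\<lambda>q. Dz1 D q / D q) p = Dz1 A p"
  proof -
    have "Dzb1 (\<lambda>q. Dz1 D q / D q) p = (Dzb1 (Dz1 D) p * D p - Dz1 D p * Dzb1 D p) / (D p)^2"
      by (rule Dzb1_div[OF U pU gexp_Dz1[OF U gD] gD Dnz])
    moreover have "Dz1 A p = (Dz1 (Dzb1 D) p * D p - Dzb1 D p * Dz1 D p) / (D p)^2"
      unfolding A_def by (rule Dz1_div[OF U pU gED gD Dnz])
    ultimately show ?thesis by (simp add: Dz1_Dzb1[OF U pU gD] mult.commute)
  qed
  have R7: "\<forall>q\<in>U. Y q = cnj (A q)"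
  proof
    fix q assume q: "q \<in> U"
    have "Dz1 Db q = cnj (Dzb1 D q)" unfolding Db_def by (rule Dz1_cnj[OF U q gD])
    then show "Y q = cnj (A q)" by (simp add: Y_def A_def Db_def)
  qed
  have EY: "Dzb1 Y p = cnj (Dz1 A p)"
  proof -
    have "Dzb1 Y p = Dzb1 (\<lambda>q. cnj (A q)) p" by (rule Dzb1_local[OF U pU R7])
    also have "\<dots> = cnj (Dz1 A p)" by (rule Dzb1_cnj[OF U pU gA])
    finally show ?thesis .
  qed
  have LA: "Dz1 A p = (Dz1 (Dzb1 D) p * D p - Dzb1 D p * Dz1 D p) / (D p)^2"
    unfolding A_def by (rule Dz1_div[OF U pU gED gD Dnz])
  have R8: "\<forall>q\<in>U. I0 F q = -1/3 * (Kop F A q / D q) + 2/3 * Y q + 2/3 * (Dz1 D q / D q)"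
  proof
    fix q assume q: "q \<in> U"
    have kb: "\<forall>x\<in>U. Dz1 (\<lambda>x. cnj (k x)) x = Db x" using Dz1_cnj[OF U _ gk] by (simp add: Db_def D_def)
    have kb2: "Dz1 (Dz1 (\<lambda>x. cnj (k x))) q = Dz1 Db q" by (rule Dz1_local[OF U q kb])
    have kb1: "Dz1 (\<lambda>x. cnj (k x)) q = Db q" using kb q by blast
    have Dq: "D q \<noteq> 0" using Dnz q by blast
    have I0q: "I0 F q = - 1/3 * Kop F (Dzb1 D) q / (D q)^2 + 1/3 * Kop F D q * Dzb1 D q / (D q)^3
        + 2/3 * Dz1 Db q / Db q + 2/3 * Dz1 D q / D q"
      unfolding I0_def Let_def k_def[symmetric] D_def[symmetric] kb2 kb1 ..
    have LAq: "Dz1 A q = (Dz1 (Dzb1 D) q * D q - Dzb1 D q * Dz1 D q) / (D q)^2"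
      unfolding A_def by (rule Dz1_div[OF U q gED gD Dnz])
    have MAq: "Dz2 A q = (Dz2 (Dzb1 D) q * D q - Dzb1 D q * Dz2 D q) / (D q)^2"
      unfolding A_def by (rule Dz2_div[OF U q gED gD Dnz])
    show "I0 F q = -1/3 * (Kop F A q / D q) + 2/3 * Y q + 2/3 * (Dz1 D q / D q)"
      unfolding I0q Kop_eq LAq MAq Y_def using Dq by (simp add: field_simps power2_eq_square power3_eq_cube)
  qed
  have R9: "\<forall>q\<in>U. V0 F q = - Dzb1 B q + (2 * A q + Pb q) * B q / 3"
  proof
    fix q assume q: "q \<in> U"
    have Dq: "D q \<noteq> 0" using Dnz q by blast
    have V0q: "V0 F q = - 1/3 * Dzb1 (Dzb1 D) q / D q + 5/9 * (Dzb1 D q / D q)^2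
      - 1/9 * Dzb1 D q * Pb q / D q + 1/3 * Dzb1 Pb q - 1/9 * Pb q * Pb q"
      unfolding V0_def Let_def k_def[symmetric] D_def[symmetric] Pb_def P_def ..
    have EAq: "Dzb1 A q = (Dzb1 (Dzb1 D) q * D q - Dzb1 D q * Dzb1 D q) / (D q)^2"
      unfolding A_def by (rule Dzb1_div[OF U q gED gD Dnz])
    have EBq: "Dzb1 B q = 1/3 * (Dzb1 A q - Dzb1 Pb q)"
    proof -
      have "Dzb1 B q = Dzb1 (\<lambda>x. 1/3 * (A x - Pb x)) q" by (simp only: B_eq)
      also have "\<dots> = 1/3 * Dzb1 (\<lambda>x. A x - Pb x) q" by (rule Dzb1_cmult[OF U q gexp_diff[OF U gA gPb]])
      also have "\<dots> = 1/3 * (Dzb1 A q - Dzb1 Pb q)" by (simp only: Dzb1_diff[OF U q gA gPb])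
      finally show ?thesis .
    qed
    show "V0 F q = - Dzb1 B q + (2 * A q + Pb q) * B q / 3"
      unfolding V0q EBq unfolding EAq unfolding B_eq A_def using Dq by (simp add: field_simps power2_eq_square)
  qed
  have R10: "Kop F (Dzb1 Pb) p = - (Dz1 (Dzb1 D) p + Dzb1 D p * P p + 2 * D p * Dzb1 P p)"
  proof -
    have "Dzb1 (Kop F Pb) p = Dzb1 (\<lambda>q. - (Dz1 D q + D q * P q)) p" by (rule Dzb1_local[OF U pU R4])
    also have "\<dots> = - Dzb1 (\<lambda>q. Dz1 D q + D q * P q) p"
      by (rule Dzb1_uminus[OF U pU gadd[OF gexp_Dz1[OF U gD] gmult[OF gD gP]]])
    also have "\<dots> = - (Dzb1 (Dz1 D) p + Dzb1 (\<lambda>q. D q * P q) p)"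
      by (simp only: Dzb1_add[OF U pU gexp_Dz1[OF U gD] gmult[OF gD gP]])
    also have "\<dots> = - (Dzb1 (Dz1 D) p + (Dzb1 D p * P p + D p * Dzb1 P p))"
      by (simp only: Dzb1_mult[OF U pU gD gP])
    finally have "Dzb1 (Kop F Pb) p = - (Dz1 (Dzb1 D) p + (Dzb1 D p * P p + D p * Dzb1 P p))"
      by (simp add: Dz1_Dzb1[OF U pU gD])
    then show ?thesis using R3[OF gPb pU] R5 pU by (simp add: algebra_simps)
  qed
  have EI0: "Dzb1 (I0 F) p = -1/3 * ((Kop F (Dzb1 A) p + D p * Dz1 A p) * D p - Kop F A p * Dzb1 D p) / (D p)^2
       + 2/3 * cnj (Dz1 A p) + 2/3 * Dz1 A p"
  proof -
    have gKA: "gexp U (Kop F A)" by (rule gKop[OF gA])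
    have g1: "gexp U (\<lambda>q. Kop F A q / D q)" by (rule gexp_div[OF U gKA gD Dnz])
    have g2: "gexp U (\<lambda>q. Dz1 D q / D q)" by (rule gexp_div[OF U gexp_Dz1[OF U gD] gD Dnz])
    have "Dzb1 (I0 F) p = Dzb1 (\<lambda>q. -1/3 * (Kop F A q / D q) + 2/3 * Y q + 2/3 * (Dz1 D q / D q)) p"
      by (rule Dzb1_local[OF U pU R8])
    also have "\<dots> = -1/3 * Dzb1 (\<lambda>q. Kop F A q / D q) p + 2/3 * Dzb1 Y p + 2/3 * Dzb1 (\<lambda>q. Dz1 D q / D q) p"
      by (simp only: Dzb1_add[OF U pU gadd[OF gexp_cmult[OF U g1] gexp_cmult[OF U gY]] gexp_cmult[OF U g2]]
          Dzb1_add[OF U pU gexp_cmult[OF U g1] gexp_cmult[OF U gY]] Dzb1_cmult[OF U pU g1]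
          Dzb1_cmult[OF U pU gY] Dzb1_cmult[OF U pU g2])
    also have "Dzb1 (\<lambda>q. Kop F A q / D q) p = (Dzb1 (Kop F A) p * D p - Kop F A p * Dzb1 D p) / (D p)^2"
      by (rule Dzb1_div[OF U pU gKA gD Dnz])
    finally show ?thesis by (simp add: R3[OF gA pU] EY R6)
  qed
  have KV0: "Kop F (V0 F) p = -((Kop F (Dzb1 A) p - Kop F (Dzb1 Pb) p)/3)
      + ((2 * Kop F A p + Kop F Pb p) * B p + (2 * A p + Pb p) * ((Kop F A p - Kop F Pb p)/3)) / 3"
  proof -
    have gEB: "gexp U (Dzb1 B)" by (rule gexp_Dzb1[OF U gB])
    have gEA: "gexp U (Dzb1 A)" by (rule gexp_Dzb1[OF U gA])
    have gEPb: "gexp U (Dzb1 Pb)" by (rule gexp_Dzb1[OF U gPb])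
    have g2: "gexp U (\<lambda>q. 2 * A q + Pb q)" by (rule gadd[OF gexp_cmult[OF U gA] gPb])
    have g3: "gexp U (\<lambda>q. (2 * A q + Pb q) * B q)" by (rule gmult[OF g2 gB])
    have g4: "gexp U (\<lambda>q. (2 * A q + Pb q) * B q / 3)" by (rule gexp_div[OF U g3 gconst]) simp
    have EB: "\<forall>q\<in>U. Dzb1 B q = 1/3 * (Dzb1 A q - Dzb1 Pb q)"
    proof
      fix q assume q: "q \<in> U"
      have "Dzb1 B q = Dzb1 (\<lambda>x. 1/3 * (A x - Pb x)) q" by (simp only: B_eq)
      also have "\<dots> = 1/3 * Dzb1 (\<lambda>x. A x - Pb x) q" by (rule Dzb1_cmult[OF U q gexp_diff[OF U gA gPb]])
      also have "\<dots> = 1/3 * (Dzb1 A q - Dzb1 Pb q)" by (simp only: Dzb1_diff[OF U q gA gPb])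
      finally show "Dzb1 B q = 1/3 * (Dzb1 A q - Dzb1 Pb q)" .
    qed
    have gEB': "gexp U (\<lambda>q. Dzb1 A q - Dzb1 Pb q)" by (rule gexp_diff[OF U gEA gEPb])
    have gen: "Op (\<lambda>q. - Dzb1 B q + (2 * A q + Pb q) * B q / 3) p =
        - (1/3 * (Op (Dzb1 A) p - Op (Dzb1 Pb) p)) + ((2 * Op A p + Op Pb p) * B p + (2 * A p + Pb p) * (1/3 * (Op A p - Op Pb p))) / 3"
      if Op_local: "\<And>f g. \<forall>q\<in>U. f q = g q \<Longrightarrow> Op f p = Op g p"
      and Op_add: "\<And>f g. gexp U f \<Longrightarrow> gexp U g \<Longrightarrow> Op (\<lambda>q. f q + g q) p = Op f p + Op g p"
      and Op_diff: "\<And>f g. gexp U f \<Longrightarrow> gexp U g \<Longrightarrow> Op (\<lambda>q. f q - g q) p = Op f p - Op g p"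
      and Op_mult: "\<And>f g. gexp U f \<Longrightarrow> gexp U g \<Longrightarrow> Op (\<lambda>q. f q * g q) p = Op f p * g p + f p * Op g p"
      and Op_uminus: "\<And>f. gexp U f \<Longrightarrow> Op (\<lambda>q. - f q) p = - Op f p"
      and Op_cmult: "\<And>f c. gexp U f \<Longrightarrow> Op (\<lambda>q. c * f q) p = c * Op f p"
      and Op_divc: "\<And>f. gexp U f \<Longrightarrow> Op (\<lambda>q. f q / 3) p = Op f p / 3"
      for Op :: "(pt \<Rightarrow> complex) \<Rightarrow> pt \<Rightarrow> complex"
    proof -
      have "Op (\<lambda>q. - Dzb1 B q + (2 * A q + Pb q) * B q / 3) p = - Op (Dzb1 B) p + Op (\<lambda>q. (2 * A q + Pb q) * B q) p / 3"
        using Op_add[OF gexp_uminus[OF U gEB] g4] Op_uminus[OF gEB] Op_divc[OF g3] by (simp only:)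
      also have "Op (Dzb1 B) p = Op (\<lambda>q. 1/3 * (Dzb1 A q - Dzb1 Pb q)) p" by (rule Op_local[OF EB])
      also have "\<dots> = 1/3 * (Op (Dzb1 A) p - Op (Dzb1 Pb) p)"
        using Op_cmult[OF gEB'] Op_diff[OF gEA gEPb] by (simp only:)
      also have "Op (\<lambda>q. (2 * A q + Pb q) * B q) p = (2 * Op A p + Op Pb p) * B p + (2 * A p + Pb p) * Op B p"
        using Op_mult[OF g2 gB] Op_add[OF gexp_cmult[OF U gA] gPb] Op_cmult[OF gA] by (simp only:)
      also have "Op B p = 1/3 * (Op A p - Op Pb p)"
        unfolding B_eq using Op_cmult[OF gexp_diff[OF U gA gPb]] Op_diff[OF gA gPb] by (simp only:)
      finally show ?thesis by (simp only:)
    qed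
    have divc1: "Dz1 (\<lambda>q. f q / 3) p = Dz1 f p / 3" if "gexp U f" for f
      using Dz1_div[OF U pU that gconst, of 3] by (simp add: Dz1_const[OF U] power2_eq_square)
    have divc2: "Dz2 (\<lambda>q. f q / 3) p = Dz2 f p / 3" if "gexp U f" for f
      using Dz2_div[OF U pU that gconst, of 3] by (simp add: Dz2_const[OF U] power2_eq_square)
    have L1: "Dz1 (V0 F) p = - (1/3 * (Dz1 (Dzb1 A) p - Dz1 (Dzb1 Pb) p)) + ((2 * Dz1 A p + Dz1 Pb p) * B p + (2 * A p + Pb p) * (1/3 * (Dz1 A p - Dz1 Pb p))) / 3"
    proof -
      have "Dz1 (V0 F) p = Dz1 (\<lambda>q. - Dzb1 B q + (2 * A q + Pb q) * B q / 3) p" by (rule Dz1_local[OF U pU R9])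
      also have "\<dots> = - (1/3 * (Dz1 (Dzb1 A) p - Dz1 (Dzb1 Pb) p)) + ((2 * Dz1 A p + Dz1 Pb p) * B p + (2 * A p + Pb p) * (1/3 * (Dz1 A p - Dz1 Pb p))) / 3"
        by (rule gen[where Op=Dz1, OF Dz1_local[OF U pU] Dz1_add[OF U pU] Dz1_diff[OF U pU] Dz1_mult[OF U pU]
            Dz1_uminus[OF U pU] Dz1_cmult[OF U pU] divc1])
      finally show ?thesis .
    qed
    have L2: "Dz2 (V0 F) p = - (1/3 * (Dz2 (Dzb1 A) p - Dz2 (Dzb1 Pb) p)) + ((2 * Dz2 A p + Dz2 Pb p) * B p + (2 * A p + Pb p) * (1/3 * (Dz2 A p - Dz2 Pb p))) / 3"
    proof -
      have "Dz2 (V0 F) p = Dz2 (\<lambda>q. - Dzb1 B q + (2 * A q + Pb q) * B q / 3) p" by (rule Dz2_local[OF U pU R9])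
      also have "\<dots> = - (1/3 * (Dz2 (Dzb1 A) p - Dz2 (Dzb1 Pb) p)) + ((2 * Dz2 A p + Dz2 Pb p) * B p + (2 * A p + Pb p) * (1/3 * (Dz2 A p - Dz2 Pb p))) / 3"
        by (rule gen[where Op=Dz2, OF Dz2_local[OF U pU] Dz2_add[OF U pU] Dz2_diff[OF U pU] Dz2_mult[OF U pU]
            Dz2_uminus[OF U pU] Dz2_cmult[OF U pU] divc2])
      finally show ?thesis .
    qed
    show ?thesis unfolding Kop_eq L1 L2 by (simp add: field_simps)
  qed
  have Bp: "B p = 1/3 * (Dzb1 D p / D p - cnj (P p))" by (simp add: B_eq A_def Pb_def)
  have I0p: "I0 F p = -1/3 * Kop F A p / D p + 2/3 * cnj (Dzb1 D p / D p) + 2/3 * Dz1 D p / D p"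
    using R8 R7 pU by (simp add: A_def)
  have main: "1/2 * Dzb1 (I0 F) p + 1/2 * B p * I0 F p + cnj (B p) * cnj (I0 F p) - 1/2 * Kop F (V0 F) p / D p =
     B p * I0 F p + cnj (B p) * cnj (I0 F p) - B p * cnj (B p) + 2/3 * complex_of_real (Re (Dz1 A p))
     + 1/3 * complex_of_real (Re (Dzb1 P p))"
  proof (rule final_alg[where KEA = "Kop F (Dzb1 A) p" and KA = "Kop F A p" and LED = "Dz1 (Dzb1 D) p"
        and LD = "Dz1 D p" and ED = "Dzb1 D p" and KPb = "Kop F Pb p" and KEPb = "Kop F (Dzb1 Pb) p"])
    show "D p \<noteq> 0" using Dnz pU by blast
    show "cnj (Dzb1 P p) = Dzb1 P p" by (rule EPr)
    show "Dz1 A p = (Dz1 (Dzb1 D) p * D p - Dzb1 D p * Dz1 D p) / (D p)^2" by (rule LA)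
    show "I0 F p = -1/3 * Kop F A p / D p + 2/3 * cnj (Dzb1 D p / D p) + 2/3 * Dz1 D p / D p" by (rule I0p)
    show "B p = 1/3 * (Dzb1 D p / D p - cnj (P p))" by (rule Bp)
    show "Kop F Pb p = - (Dz1 D p + D p * P p)" using R4 pU by blast
    show "Kop F (Dzb1 Pb) p = - (Dz1 (Dzb1 D) p + Dzb1 D p * P p + 2 * D p * Dzb1 P p)" by (rule R10)
    show "Kop F (V0 F) p = - ((Kop F (Dzb1 A) p - Kop F (Dzb1 Pb) p) / 3) +
      ((2 * Kop F A p + Kop F Pb p) * B p + (2 * (Dzb1 D p / D p) + cnj (P p)) * ((Kop F A p - Kop F Pb p) / 3)) / 3"
      using KV0 by (simp add: A_def Pb_def)
    show "Dzb1 (I0 F) p = -1/3 * ((Kop F (Dzb1 A) p + D p * Dz1 A p) * D p - Kop F A p * Dzb1 D p) / (D p)^2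
       + 2/3 * cnj (Dz1 A p) + 2/3 * Dz1 A p" by (rule EI0)
  qed
  show "Q0 F p =
      Bfun F p * I0 F p + cnj (Bfun F p) * cnj (I0 F p) - Bfun F p * cnj (Bfun F p)
      + 2/3 * complex_of_real (Re (Dz1 (\<lambda>q. Dzb1 (Dzb1 (slant F)) q / Dzb1 (slant F) q) p))
      + 1/3 * complex_of_real (Re (Dzb1 (Pfun F) p))"
    using main unfolding Q0_def B_def[symmetric] A_def D_def k_def P_def .
qed

end
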